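(* Let $q$ be an odd prime and let $(G,H,T)$ be the envelope of a right conjugacy closed loop of order $2q$. Let $K$ be a subgroup with $H\lneq K\lneq G$, $|G:K|=q$ and $|K:H|=2$. If $N_G(K)=K$, then there is $M\trianglelefteq G$ with $|G:HM|=2$.
   Context: For a finite loop $\mathcal{L}$ with identity $e$: $G=\langle R_a\mid a\in\mathcal L\rangle$ with $R_a\colon x\mapsto xa$, $H$ the stabilizer of $e$ in $G$, $T=\{R_a\}$; $(G,H,T)$ is the envelope; the loop is right conjugacy closed if $T$ is a union of conjugacy classes of $G$. *)

theory Defs
  imports "HOL-Algebra.Algebra"
begin

definition is_loop :: "'a set \<Rightarrow> ('a \<Rightarrow> 'a \<Rightarrow> 'a) \<Rightarrow> 'a \<Rightarrow> bool" where
  "is_loop L m e \<longleftrightarrow> e \<in> L \<and> (\<forall>x\<in>L. \<forall>y\<in>L. m x y \<in> L)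
     \<and> (\<forall>x\<in>L. m e x = x \<and> m x e = x)
     \<and> (\<forall>a\<in>L. \<forall>b\<in>L. \<exists>!x. x \<in> L \<and> m a x = b)
     \<and> (\<forall>a\<in>L. \<forall>b\<in>L. \<exists>!y. y \<in> L \<and> m y a = b)"

definition right_mult :: "'a set \<Rightarrow> ('a \<Rightarrow> 'a \<Rightarrow> 'a) \<Rightarrow> 'a \<Rightarrow> ('a \<Rightarrow> 'a)" where
  "right_mult L m a = (\<lambda>x\<in>L. m x a)"

definition env_T :: "'a set \<Rightarrow> ('a \<Rightarrow> 'a \<Rightarrow> 'a) \<Rightarrow> ('a \<Rightarrow> 'a) set" where
  "env_T L m = right_mult L m ` L"

definition env_G :: "'a set \<Rightarrow> ('a \<Rightarrow> 'a \<Rightarrow> 'a) \<Rightarrow> ('a \<Rightarrow> 'a) monoid" where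
  "env_G L m = (BijGroup L)\<lparr>carrier := generate (BijGroup L) (env_T L m)\<rparr>"

definition env_H :: "'a set \<Rightarrow> ('a \<Rightarrow> 'a \<Rightarrow> 'a) \<Rightarrow> 'a \<Rightarrow> ('a \<Rightarrow> 'a) set" where
  "env_H L m e = {g \<in> carrier (env_G L m). g e = e}"

definition rcc_loop :: "'a set \<Rightarrow> ('a \<Rightarrow> 'a \<Rightarrow> 'a) \<Rightarrow> 'a \<Rightarrow> bool" where
  "rcc_loop L m e \<longleftrightarrow> is_loop L m e \<and>
     (\<forall>g\<in>carrier (env_G L m). \<forall>t\<in>env_T L m.
        g \<otimes>\<^bsub>env_G L m\<^esub> t \<otimes>\<^bsub>env_G L m\<^esub> inv\<^bsub>env_G L m\<^esub> g \<in> env_T L m)"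

end

theory Submission
  imports Defs
begin

locale env_setup =
  fixes L :: "'a set" and m :: "'a \<Rightarrow> 'a \<Rightarrow> 'a" and e :: 'a
    and q :: nat and K :: "('a \<Rightarrow> 'a) set"
  assumes prime_q: "Factorial_Ring.prime q" and odd_q: "odd q"
    and rcc: "rcc_loop L m e"
    and cardL: "card L = 2 * q"
    and sgK: "subgroup K (env_G L m)"
    and HK: "env_H L m e \<subset> K" and KG: "K \<subset> carrier (env_G L m)"
    and cardG: "card (carrier (env_G L m)) = q * card K"
    and cardK: "card K = 2 * card (env_H L m e)"
    and normK: "normalizer (env_G L m) K = K"
begin

abbreviation "G \<equiv> env_G L m"
abbreviation "H \<equiv> env_H L m e"
abbreviation "T \<equiv> env_T L m"
abbreviation "R \<equiv> right_mult L m"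
abbreviation gm (infixl "\<star>" 70) where "x \<star> y \<equiv> x \<otimes>\<^bsub>G\<^esub> y"
abbreviation gi where "gi x \<equiv> inv\<^bsub>G\<^esub> x"
abbreviation gone where "gone \<equiv> \<one>\<^bsub>G\<^esub>"
abbreviation pw where "pw x (n::nat) \<equiv> x [^]\<^bsub>G\<^esub> n"

lemma loop: "is_loop L m e" using rcc by (simp add: rcc_loop_def)
lemma q_gt2: "q > 2"
proof -
  have "q \<ge> 2" using prime_q by (simp add: prime_ge_2_nat)
  moreover have "q \<noteq> 2" using odd_q by auto
  ultimately show ?thesis by simp
qed
lemma finL: "finite L"
proof (rule ccontr)
  assume "infinite L" then have "card L = 0" by simp
  with cardL q_gt2 show False by simp
qed
lemma eL: "e \<in> L" using loop by (simp add: is_loop_def)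
lemma mcl: "x \<in> L \<Longrightarrow> y \<in> L \<Longrightarrow> m x y \<in> L" using loop by (simp add: is_loop_def)
lemma lid: "x \<in> L \<Longrightarrow> m e x = x" using loop by (simp add: is_loop_def)
lemma rid: "x \<in> L \<Longrightarrow> m x e = x" using loop by (simp add: is_loop_def)
lemma runiq: assumes "a \<in> L" "b \<in> L" shows "\<exists>!y. y \<in> L \<and> m y a = b"
proof -
  have h: "\<forall>a\<in>L. \<forall>b\<in>L. \<exists>!y. y \<in> L \<and> m y a = b" using loop by (simp add: is_loop_def)
  show ?thesis using bspec[OF bspec[OF h assms(1)] assms(2)] .
qed
lemma runiq2: "a \<in> L \<Longrightarrow> y1 \<in> L \<Longrightarrow> y2 \<in> L \<Longrightarrow> m y1 a = m y2 a \<Longrightarrow> y1 = y2"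
proof -
  assume h: "a \<in> L" "y1 \<in> L" "y2 \<in> L" "m y1 a = m y2 a"
  have u: "\<exists>!y. y \<in> L \<and> m y a = m y1 a" using runiq h mcl by simp
  have "(THE y. y \<in> L \<and> m y a = m y1 a) = y1" by (rule the1_equality[OF u]) (simp add: h)
  moreover have "(THE y. y \<in> L \<and> m y a = m y1 a) = y2" by (rule the1_equality[OF u]) (simp add: h)
  ultimately show ?thesis by simp
qed
lemma rex: "a \<in> L \<Longrightarrow> b \<in> L \<Longrightarrow> \<exists>y. y \<in> L \<and> m y a = b"
  by (rule ex1_implies_ex[OF runiq])

lemma R_Bij: assumes "a \<in> L" shows "R a \<in> Bij L"
proof -
  have "inj_on (\<lambda>x. m x a) L"
  proof (rule inj_onI)
    fix x y assume "x \<in> L" "y \<in> L" "m x a = m y a"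
    then show "x = y" using runiq2 assms by simp
  qed
  moreover have "(\<lambda>x. m x a) ` L = L"
  proof
    show "(\<lambda>x. m x a) ` L \<subseteq> L" using mcl assms by auto
    show "L \<subseteq> (\<lambda>x. m x a) ` L"
    proof
      fix b assume "b \<in> L"
      then obtain y where "y \<in> L" "m y a = b" using rex assms by blast
      then show "b \<in> (\<lambda>x. m x a) ` L" by blast
    qed
  qed
  ultimately have "bij_betw (\<lambda>x. m x a) L L" by (simp add: bij_betw_def)
  then have "bij_betw (R a) L L" unfolding right_mult_def
    by (rule bij_betw_cong[THEN iffD1, rotated]) simp
  then show ?thesis unfolding Bij_def right_mult_def by simp
qed

lemma T_Bij: "T \<subseteq> Bij L" using R_Bij by (auto simp: env_T_def)

lemma grpB: "group (BijGroup L)" by (rule group_BijGroup)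

lemma sg_gen: "subgroup (generate (BijGroup L) T) (BijGroup L)"
  using group.generate_is_subgroup[OF grpB] T_Bij by (simp add: BijGroup_def)

lemma carrG: "carrier G = generate (BijGroup L) T" by (simp add: env_G_def)

lemma grpG: "group G"
  unfolding env_G_def using subgroup.subgroup_is_group[OF sg_gen grpB] .

sublocale G: group G by (rule grpG)

lemma carr_Bij: "g \<in> carrier G \<Longrightarrow> g \<in> Bij L"
  using subgroup.subset[OF sg_gen] carrG by (auto simp: BijGroup_def)

lemma multG: assumes "g \<in> carrier G" "h \<in> carrier G" shows "g \<star> h = compose L g h"
proof -
  have b: "g \<in> Bij L" "h \<in> Bij L" using assms carr_Bij by auto
  have "g \<star> h = g \<otimes>\<^bsub>BijGroup L\<^esub> h" by (simp add: env_G_def)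
  also have "\<dots> = compose L g h" using b by (simp add: BijGroup_def)
  finally show ?thesis .
qed

lemma ev_mult: "g \<in> carrier G \<Longrightarrow> h \<in> carrier G \<Longrightarrow> x \<in> L \<Longrightarrow> (g \<star> h) x = g (h x)"
  by (simp add: multG compose_def)

lemma one_eq: "gone = (\<lambda>x\<in>L. x)" by (simp add: env_G_def BijGroup_def)
lemma ev_one: "x \<in> L \<Longrightarrow> gone x = x" by (simp add: one_eq)

lemma ev_closed: "g \<in> carrier G \<Longrightarrow> x \<in> L \<Longrightarrow> g x \<in> L"
  using carr_Bij Bij_imp_funcset by fastforce

lemma ev_inj: "g \<in> carrier G \<Longrightarrow> x \<in> L \<Longrightarrow> y \<in> L \<Longrightarrow> g x = g y \<Longrightarrow> x = y"
  using carr_Bij by (auto simp: Bij_def bij_betw_def inj_on_def)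

lemma ext: assumes "g \<in> carrier G" "h \<in> carrier G" "\<And>x. x \<in> L \<Longrightarrow> g x = h x" shows "g = h"
proof -
  have "g \<in> extensional L" "h \<in> extensional L" using assms carr_Bij Bij_imp_extensional by auto
  then show ?thesis using assms(3) extensionalityI by blast
qed

lemma ev_inv1: "g \<in> carrier G \<Longrightarrow> x \<in> L \<Longrightarrow> gi g (g x) = x"
  using ev_mult[of "gi g" g x] by (simp add: ev_one)
lemma ev_inv2: "g \<in> carrier G \<Longrightarrow> x \<in> L \<Longrightarrow> g (gi g x) = x"
  using ev_mult[of g "gi g" x] by (simp add: ev_one)

lemma R_in: "a \<in> L \<Longrightarrow> R a \<in> carrier G"
  unfolding carrG by (rule generate.incl) (simp add: env_T_def)
lemma R_ev: "a \<in> L \<Longrightarrow> x \<in> L \<Longrightarrow> R a x = m x a" by (simp add: right_mult_def)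
lemma R_e_ev: "a \<in> L \<Longrightarrow> R a e = a" by (simp add: R_ev eL lid)
lemma T_carr: "T \<subseteq> carrier G" using R_in by (auto simp: env_T_def)
lemma T_unique: "t \<in> T \<Longrightarrow> t' \<in> T \<Longrightarrow> t e = t' e \<Longrightarrow> t = t'"
  by (auto simp: env_T_def R_e_ev)
lemma T_eq: "t \<in> T \<Longrightarrow> t = R (t e)"
  by (auto simp: env_T_def R_e_ev)
lemma R_T: "a \<in> L \<Longrightarrow> R a \<in> T" by (simp add: env_T_def)
lemma R_inj: "a \<in> L \<Longrightarrow> b \<in> L \<Longrightarrow> R a = R b \<Longrightarrow> a = b"
proof -
  assume h: "a \<in> L" "b \<in> L" "R a = R b"
  have "a = R a e" using R_e_ev[OF h(1)] by simp
  also have "\<dots> = R b e" using h(3) by simp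
  also have "\<dots> = b" using R_e_ev[OF h(2)] by simp
  finally show ?thesis .
qed
lemma card_T: "card T = 2 * q"
proof -
  have "inj_on R L" using R_inj by (auto intro: inj_onI)
  then show ?thesis unfolding env_T_def by (simp add: card_image cardL)
qed
lemma R_e: "R e = gone"
  by (rule ext[OF R_in[OF eL] G.one_closed]) (simp add: R_ev eL rid ev_one)
lemma one_T: "gone \<in> T" using R_T[OF eL] R_e by simp
lemma conjT: "g \<in> carrier G \<Longrightarrow> t \<in> T \<Longrightarrow> g \<star> t \<star> gi g \<in> T"
  using rcc by (simp add: rcc_loop_def)

lemma H_iff: "h \<in> H \<longleftrightarrow> h \<in> carrier G \<and> h e = e" by (simp add: env_H_def)

lemma decomp: assumes g: "g \<in> carrier G" shows "gi (R (g e)) \<star> g \<in> H"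
proof -
  have a: "g e \<in> L" using g ev_closed eL by simp
  have "(gi (R (g e)) \<star> g) e = gi (R (g e)) (g e)" using g a R_in eL ev_mult by simp
  also have "\<dots> = gi (R (g e)) (R (g e) e)" using R_e_ev[OF a] by simp
  also have "\<dots> = e" using ev_inv1 R_in[OF a] eL by simp
  finally show ?thesis unfolding H_iff using g a R_in by simp
qed

lemma aut: assumes "h \<in> H" "a \<in> L" shows "h \<star> R a \<star> gi h = R (h a)"
proof -
  have hc: "h \<in> carrier G" and he: "h e = e" using assms H_iff by auto
  have "h \<star> R a \<star> gi h \<in> T" using conjT hc R_T assms by simp
  moreover have "gi h e = e" using ev_inv1[OF hc eL] he by simp
  then have "(h \<star> R a \<star> gi h) e = h a"
    using hc assms by (simp add: ev_mult R_in eL R_e_ev)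
  ultimately show ?thesis using T_eq by metis
qed

lemma finG: "finite (carrier G)"
proof -
  have "carrier G \<subseteq> L \<rightarrow>\<^sub>E L"
  proof
    fix g assume "g \<in> carrier G"
    then have "g \<in> Bij L" by (rule carr_Bij)
    then have "g \<in> L \<rightarrow> L" "g \<in> extensional L" using Bij_imp_funcset Bij_imp_extensional by auto
    then show "g \<in> L \<rightarrow>\<^sub>E L" by (simp add: PiE_def)
  qed
  moreover have "finite (L \<rightarrow>\<^sub>E L)" using finL by (simp add: finite_PiE)
  ultimately show ?thesis using finite_subset by blast
qed

lemma gen_induct:
  assumes g: "g \<in> carrier G" and one: "P gone" and incl: "\<And>t. t \<in> T \<Longrightarrow> P t"
    and inv: "\<And>t. t \<in> T \<Longrightarrow> P (gi t)"
    and mul: "\<And>x y. x \<in> carrier G \<Longrightarrow> y \<in> carrier G \<Longrightarrow> P x \<Longrightarrow> P y \<Longrightarrow> P (x \<star> y)"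
  shows "P g"
proof -
  have "g \<in> generate (BijGroup L) T" using g carrG by simp
  then have "P g \<and> g \<in> carrier G"
  proof (induction rule: generate.induct)
    case one
    then show ?case using \<open>P gone\<close> by (simp add: env_G_def generate.one)
  next
    case (incl h)
    then show ?case using \<open>\<And>t. t \<in> T \<Longrightarrow> P t\<close> T_carr by auto
  next
    case (inv h)
    have hT: "h \<in> T" using inv by simp
    have "inv\<^bsub>BijGroup L\<^esub> h = gi h"
      unfolding env_G_def
      using group.m_inv_consistent[OF grpB sg_gen generate.incl[OF hT]] by simp
    then show ?case using \<open>\<And>t. t \<in> T \<Longrightarrow> P (gi t)\<close> inv T_carr by auto
  next
    case (eng h1 h2)
    have "h1 \<otimes>\<^bsub>BijGroup L\<^esub> h2 = h1 \<star> h2" by (simp add: env_G_def)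
    then show ?case using eng mul by auto
  qed
  then show ?thesis by simp
qed


lemma K_carr: "K \<subseteq> carrier G" using KG by auto
lemma H_sub_K: "H \<subseteq> K" using HK by auto
lemma H_carr: "H \<subseteq> carrier G" by (auto simp: H_iff)
lemma finK: "finite K" using finG K_carr finite_subset by blast
lemma finH: "finite H" using finG H_carr finite_subset by blast

lemma conj_comm: "x \<in> carrier G \<Longrightarrow> y \<in> carrier G \<Longrightarrow> x \<star> y \<star> gi x = y \<longleftrightarrow> x \<star> y = y \<star> x"
proof
  assume c: "x \<in> carrier G" "y \<in> carrier G" and h: "x \<star> y \<star> gi x = y"
  have "x \<star> y = (x \<star> y \<star> gi x) \<star> x" using c by (simp add: G.m_assoc)
  then show "x \<star> y = y \<star> x" using h by simp
next
  assume c: "x \<in> carrier G" "y \<in> carrier G" and h: "x \<star> y = y \<star> x"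
  then show "x \<star> y \<star> gi x = y" using c by (simp add: G.m_assoc)
qed

lemma exK: "\<exists>f. f \<in> L \<and> f \<noteq> e \<and> K = {g \<in> carrier G. g e = e \<or> g e = f}"
proof -
  obtain k where k: "k \<in> K" "k \<notin> H" using HK by auto
  have kc: "k \<in> carrier G" using k K_carr by auto
  define f where "f = k e"
  have fL: "f \<in> L" using ev_closed kc eL f_def by simp
  have fe: "f \<noteq> e" using k kc H_iff f_def by auto
  have cardKH: "card (K - H) = card H" using cardK card_Diff_subset[OF finH H_sub_K] by simp
  let ?kH = "(\<lambda>h. k \<star> h) ` H"
  have sub: "?kH \<subseteq> K - H"
  proof
    fix x assume "x \<in> ?kH" then obtain h where h: "h \<in> H" "x = k \<star> h" by auto
    have hc: "h \<in> carrier G" and he: "h e = e" using h H_iff by auto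
    have "x \<in> K" using subgroup.m_closed[OF sgK k(1)] h H_sub_K by auto
    moreover have "x e = f" using h kc hc he ev_mult eL f_def by simp
    ultimately show "x \<in> K - H" using fe H_iff by auto
  qed
  have "card ?kH = card H"
    by (rule card_image) (auto intro!: inj_onI simp: kc H_iff)
  then have eq: "?kH = K - H" using card_subset_eq[OF _ sub] finK cardKH by auto
  show ?thesis
  proof (intro exI conjI)
    show "K = {g \<in> carrier G. g e = e \<or> g e = f}"
    proof
      show "K \<subseteq> {g \<in> carrier G. g e = e \<or> g e = f}"
      proof
        fix g assume g: "g \<in> K"
        show "g \<in> {g \<in> carrier G. g e = e \<or> g e = f}"
        proof (cases "g \<in> H")
          case True then show ?thesis by (auto simp: H_iff)
        next
          case False
          then have "g \<in> ?kH" using eq g by auto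
          then obtain h where "h \<in> H" "g = k \<star> h" by auto
          then show ?thesis using kc ev_mult eL f_def H_iff by auto
        qed
      qed
      show "{g \<in> carrier G. g e = e \<or> g e = f} \<subseteq> K"
      proof
        fix g assume g: "g \<in> {g \<in> carrier G. g e = e \<or> g e = f}"
        then have gc: "g \<in> carrier G" by simp
        show "g \<in> K"
        proof (cases "g e = e")
          case True then show ?thesis using gc H_iff H_sub_K by auto
        next
          case False
          then have ge: "g e = f" using g by auto
          have "gi k \<star> g \<in> H" using H_iff gc kc ev_mult eL ge f_def ev_inv1 by simp
          then have "k \<star> (gi k \<star> g) \<in> K" using subgroup.m_closed[OF sgK k(1)] H_sub_K by auto
          moreover have "k \<star> (gi k \<star> g) = g" using kc gc by (simp add: G.m_assoc[symmetric])
          ultimately show ?thesis by simp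
        qed
      qed
    qed
  qed (use fL fe in auto)
qed

definition f where "f = (SOME f. f \<in> L \<and> f \<noteq> e \<and> K = {g \<in> carrier G. g e = e \<or> g e = f})"
lemma f_prop: "f \<in> L \<and> f \<noteq> e \<and> K = {g \<in> carrier G. g e = e \<or> g e = f}"
  unfolding f_def using someI_ex[OF exK] .
lemma fL: "f \<in> L" using f_prop by simp
lemma fe: "f \<noteq> e" using f_prop by simp
lemma K_iff: "g \<in> K \<longleftrightarrow> g \<in> carrier G \<and> (g e = e \<or> g e = f)"
  using f_prop by blast

lemma Rf_c: "R f \<in> carrier G" using R_in fL .
lemma Rf_K: "R f \<in> K" using K_iff Rf_c R_e_ev fL by simp
lemma H_fix_f: assumes "h \<in> H" shows "h f = f"
proof -
  have hc: "h \<in> carrier G" and he: "h e = e" using assms H_iff by auto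
  have "h \<star> R f \<in> K" using subgroup.m_closed[OF sgK] assms H_sub_K Rf_K by auto
  then have "h f = e \<or> h f = f" using K_iff ev_mult hc Rf_c eL R_e_ev fL by auto
  moreover have "h f \<noteq> e" using ev_inj[OF hc fL eL] he fe by auto
  ultimately show ?thesis by simp
qed
lemma Rf_f: "R f f = e"
proof -
  have "R f \<star> R f \<in> K" using subgroup.m_closed[OF sgK] Rf_K by auto
  then have "R f f = e \<or> R f f = f" using K_iff ev_mult Rf_c eL R_e_ev fL by auto
  moreover have "R f f \<noteq> f" using ev_inj[OF Rf_c fL eL] R_e_ev[OF fL] fe by auto
  ultimately show ?thesis by simp
qed
lemma H_comm_Rf: assumes "h \<in> H" shows "h \<star> R f = R f \<star> h"
proof -
  have "h \<star> R f \<star> gi h = R f" using aut[OF assms fL] H_fix_f[OF assms] by simp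
  then show ?thesis using conj_comm assms H_carr Rf_c by auto
qed

definition z where "z a = R a f"
lemma z_L: "a \<in> L \<Longrightarrow> z a \<in> L" unfolding z_def using R_in ev_closed fL by simp
lemma z_comm: assumes g: "g \<in> carrier G" and a: "a \<in> L" shows "z (g a) = g (z a)"
proof -
  define b where "b = g a"
  have bL: "b \<in> L" using g a ev_closed b_def by simp
  have ga: "g \<star> R a \<in> carrier G" using g R_in a by simp
  have "(g \<star> R a) e = b" using g a ev_mult R_in eL R_e_ev b_def by simp
  then have w: "gi (R b) \<star> (g \<star> R a) \<in> H" using decomp[OF ga] by simp
  define w where "w = gi (R b) \<star> (g \<star> R a)"
  have wH: "w \<in> H" using w unfolding w_def .
  have wc: "w \<in> carrier G" using wH H_carr by auto
  have eq: "g \<star> R a = R b \<star> w" unfolding w_def using ga R_in bL by (simp add: G.m_assoc[symmetric])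
  have "g (z a) = (g \<star> R a) f" using g a ev_mult R_in fL z_def by simp
  also have "\<dots> = R b (w f)" using eq ev_mult R_in bL wc fL by simp
  also have "\<dots> = R b f" using H_fix_f[OF wH] by simp
  finally show ?thesis using z_def b_def by simp
qed
lemma z_f: "z f = e" using z_def Rf_f by simp
lemma z_e: "z e = f" using z_def R_e_ev fL R_e ev_one by (simp add: eL)
lemma z_z: "a \<in> L \<Longrightarrow> z (z a) = a"
proof -
  assume a: "a \<in> L"
  have "z (z a) = z (R a f)" by (simp add: z_def)
  also have "\<dots> = R a (z f)" using z_comm R_in a fL by simp
  finally show ?thesis using z_f R_e_ev a by simp
qed
lemma z_ne: assumes a: "a \<in> L" shows "z a \<noteq> a"
proof
  assume "z a = a"
  then have "R a f = R a e" using z_def R_e_ev a by simp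
  then have "f = e" using ev_inj[OF R_in[OF a] fL eL] by simp
  then show False using fe by simp
qed
lemma z_inj: "a \<in> L \<Longrightarrow> b \<in> L \<Longrightarrow> z a = z b \<Longrightarrow> a = b" using z_z by metis

lemma pw_c: "x \<in> carrier G \<Longrightarrow> pw x n \<in> carrier G" by simp
lemma pw_fix: "x \<in> carrier G \<Longrightarrow> a \<in> L \<Longrightarrow> x a = a \<Longrightarrow> pw x n a = a"
  by (induction n) (simp_all add: ev_one ev_mult)
lemma pw_mod: assumes "x \<in> carrier G" "pw x q = gone" shows "pw x n = pw x (n mod q)"
proof -
  have "pw x n = pw x (q * (n div q) + n mod q)" by simp
  also have "\<dots> = pw x (q * (n div q)) \<star> pw x (n mod q)"
    by (rule G.nat_pow_mult[OF assms(1), symmetric])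
  also have "pw x (q * (n div q)) = pw (pw x q) (n div q)"
    using G.nat_pow_pow[OF assms(1)] by simp
  finally show ?thesis using assms by simp
qed
lemma pw_trick: assumes x: "x \<in> carrier G" "pw x q = gone" and i: "\<not> q dvd i"
  shows "\<exists>j. x = pw (pw x i) j"
proof -
  have i0: "i \<noteq> 0"
  proof
    assume "i = 0" with i show False by simp
  qed
  have "coprime q i" using prime_imp_coprime[OF prime_q i] .
  then have g1: "gcd i q = 1" by (simp add: coprime_iff_gcd_eq_1 gcd.commute)
  obtain u v where uv: "i * u = q * v + gcd i q" using bezout_nat[OF i0] by blast
  have "pw (pw x i) u = pw x (i * u)" using x by (simp add: G.nat_pow_pow)
  also have "\<dots> = pw x ((i * u) mod q)" using pw_mod x by blast
  also have "(i * u) mod q = 1"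
  proof -
    have "i * u = q * v + 1" using uv g1 by simp
    then have "(i * u) mod q = (q * v + 1) mod q" by simp
    also have "\<dots> = 1 mod q" by (rule mod_mult_self4)
    finally show ?thesis using q_gt2 by simp
  qed
  finally have "pw (pw x i) u = x" using x by simp
  then show ?thesis by metis
qed
lemma pw_comm: "a \<in> carrier G \<Longrightarrow> y \<in> carrier G \<Longrightarrow> a \<star> y = y \<star> a \<Longrightarrow> pw a n \<star> y = y \<star> pw a n"
proof (induction n)
  case 0 then show ?case by simp
next
  case (Suc n)
  have "pw a (Suc n) \<star> y = pw a n \<star> (a \<star> y)" using Suc.prems by (simp add: G.m_assoc)
  also have "\<dots> = (pw a n \<star> y) \<star> a" using Suc.prems by (simp add: G.m_assoc)
  also have "\<dots> = y \<star> pw a (Suc n)" using Suc by (simp add: G.m_assoc)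
  finally show ?case .
qed
lemma CT1: assumes "x \<in> carrier G" "y \<in> carrier G" "pw x q = gone" "\<not> q dvd i"
  "pw x i \<star> y = y \<star> pw x i" shows "x \<star> y = y \<star> x"
proof -
  obtain j where "x = pw (pw x i) j" using pw_trick assms by blast
  then show ?thesis using pw_comm[of "pw x i" y j] assms by simp
qed
lemma CT2: assumes "x \<in> carrier G" "pw x q = gone" "\<not> q dvd i" "a \<in> L" "pw x i a = a"
  shows "x a = a"
proof -
  obtain j where "x = pw (pw x i) j" using pw_trick assms by blast
  then show ?thesis using pw_fix[of "pw x i" a j] assms by simp
qed
lemma pw_z: "x \<in> carrier G \<Longrightarrow> a \<in> L \<Longrightarrow> pw x n (z a) = z (pw x n a)"
  using z_comm[of "pw x n" a] by simp
lemma pw_ev_add: "x \<in> carrier G \<Longrightarrow> a \<in> L \<Longrightarrow> pw x (i + j) a = pw x i (pw x j a)"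
  using ev_mult[of "pw x i" "pw x j" a] by (simp add: G.nat_pow_mult)
lemma pw_evL: "x \<in> carrier G \<Longrightarrow> a \<in> L \<Longrightarrow> pw x n a \<in> L" using ev_closed by simp
lemma not_dvd2: "\<not> q dvd i \<Longrightarrow> \<not> q dvd (i + i)"
proof
  assume a: "\<not> q dvd i" "q dvd (i + i)"
  then have "q dvd 2 * i" by (simp add: mult_2)
  then have "q dvd 2 \<or> q dvd i" using prime_dvd_mult_iff prime_q by blast
  then show False using a q_gt2 by (auto dest: dvd_imp_le)
qed
lemma lemX: assumes d: "d \<in> carrier G" "pw d q = gone" and i: "\<not> q dvd i" and a: "a \<in> L"
  and h: "pw d i a = z a" shows "d a = a"
proof -
  have "pw d (i + i) a = pw d i (pw d i a)" using pw_ev_add d a by simp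
  also have "\<dots> = z (z a)" using h pw_z d a by simp
  also have "\<dots> = a" using z_z a by simp
  finally show ?thesis using CT2[OF d not_dvd2[OF i] a] by simp
qed


lemma cancel1[simp]: "g \<in> carrier G \<Longrightarrow> y \<in> carrier G \<Longrightarrow> gi g \<star> (g \<star> y) = y"
  by (simp add: G.m_assoc[symmetric])
lemma cancel2[simp]: "g \<in> carrier G \<Longrightarrow> y \<in> carrier G \<Longrightarrow> g \<star> (gi g \<star> y) = y"
  by (simp add: G.m_assoc[symmetric])

lemma pw_conj: "g \<in> carrier G \<Longrightarrow> x \<in> carrier G \<Longrightarrow> pw (g \<star> x \<star> gi g) n = g \<star> pw x n \<star> gi g"
  by (induction n) (simp_all add: G.m_assoc)

lemma conj_q: "g \<in> carrier G \<Longrightarrow> x \<in> carrier G \<Longrightarrow> pw x q = gone \<Longrightarrow> pw (g \<star> x \<star> gi g) q = gone"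
  using pw_conj by simp
lemma conj_ne: assumes "g \<in> carrier G" "x \<in> carrier G" "x \<noteq> gone" shows "g \<star> x \<star> gi g \<noteq> gone"
proof
  assume h: "g \<star> x \<star> gi g = gone"
  have "x = gi g \<star> (g \<star> x \<star> gi g) \<star> g" using assms by (simp add: G.m_assoc)
  also have "\<dots> = gone" using h assms by simp
  finally show False using assms by simp
qed

lemma ex_c: "\<exists>c. c \<in> carrier G \<and> pw c q = gone \<and> c \<noteq> gone"
proof -
  have "order G = q ^ 1 * card K" using cardG by (simp add: order_def)
  then obtain P where P: "subgroup P G" "card P = q ^ 1"
    using sylow_thm[OF prime_q grpG _ finG] by blast
  have Pne: "P \<noteq> {gone}"
  proof
    assume "P = {gone}" then have "card P = 1" by simp
    then show False using P(2) q_gt2 by simp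
  qed
  have "gone \<in> P" using subgroup.one_closed[OF P(1)] .
  then obtain x where x: "x \<in> P" "x \<noteq> gone" using Pne by blast
  have xc: "x \<in> carrier G" using x(1) subgroup.mem_carrier[OF P(1)] by simp
  have grpP: "group (G\<lparr>carrier := P\<rparr>)" using subgroup.subgroup_is_group[OF P(1) grpG] .
  have "x [^]\<^bsub>G\<lparr>carrier := P\<rparr>\<^esub> (order (G\<lparr>carrier := P\<rparr>)) = \<one>\<^bsub>G\<lparr>carrier := P\<rparr>\<^esub>"
    using group.pow_order_eq_1[OF grpP] x(1) by simp
  then have "x [^]\<^bsub>G\<lparr>carrier := P\<rparr>\<^esub> q = gone" using P(2) by (simp add: order_def)
  then have "pw x q = gone" using G.nat_pow_consistent[of x q P] by simp
  then show ?thesis using xc x(2) by blast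
qed

definition c where "c = (SOME c. c \<in> carrier G \<and> pw c q = gone \<and> c \<noteq> gone)"
lemma c_prop: "c \<in> carrier G \<and> pw c q = gone \<and> c \<noteq> gone"
  unfolding c_def using someI_ex[OF ex_c] .
lemma c_c: "c \<in> carrier G" using c_prop by simp
lemma c_q: "pw c q = gone" using c_prop by simp
lemma c_ne: "c \<noteq> gone" using c_prop by simp

lemma pw_one_ev: "d \<in> carrier G \<Longrightarrow> pw d (Suc 0) = d" by simp

lemma d_pw_ev: assumes "d \<in> carrier G" "b \<in> L" shows "d (pw d n b) = pw d n (d b)"
proof -
  have "d (pw d n b) = pw d (Suc 0 + n) b" using pw_ev_add[of d b "Suc 0" n] assms by simp
  also have "\<dots> = pw d (n + Suc 0) b" by (simp add: add.commute)
  also have "\<dots> = pw d n (d b)" using pw_ev_add[of d b n "Suc 0"] assms by simp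
  finally show ?thesis .
qed

lemma H1: assumes "d \<in> carrier G" "b \<in> L" "d b \<noteq> b" shows "d (pw d n b) \<noteq> pw d n b"
proof
  assume "d (pw d n b) = pw d n b"
  then have "pw d n (d b) = pw d n b" using d_pw_ev assms by simp
  then have "d b = b" using ev_inj[of "pw d n" "d b" b] assms ev_closed by simp
  then show False using assms by simp
qed

lemma H2: assumes d: "d \<in> carrier G" "pw d q = gone" and b: "b \<in> L" "d b \<noteq> b"
  and k: "0 < k" "k < q"
  shows "pw d k (pw d n b) \<noteq> pw d n b \<and> pw d k (pw d n b) \<noteq> z (pw d n b)"
proof -
  have nd: "\<not> q dvd k" using k by (auto dest: dvd_imp_le)
  have yL: "pw d n b \<in> L" using pw_evL d b by simp
  have ny: "d (pw d n b) \<noteq> pw d n b" using H1 d b by simp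
  show ?thesis
  proof
    show "pw d k (pw d n b) \<noteq> pw d n b"
      using CT2[OF d nd yL] ny by auto
    show "pw d k (pw d n b) \<noteq> z (pw d n b)"
      using lemX[OF d nd yL] ny by auto
  qed
qed

lemma DIST1: assumes d: "d \<in> carrier G" "pw d q = gone" and b: "b \<in> L" "d b \<noteq> b"
  and ij: "i < j" "j < q" shows "pw d i b \<noteq> pw d j b"
proof -
  have eq: "pw d j b = pw d (j - i) (pw d i b)" using pw_ev_add[of d b "j - i" i] d b ij by simp
  have k: "0 < j - i" "j - i < q" using ij by auto
  have "pw d (j - i) (pw d i b) \<noteq> pw d i b" using H2[OF d b k] by simp
  then show ?thesis using eq by simp
qed

lemma DIST2: assumes d: "d \<in> carrier G" "pw d q = gone" and b: "b \<in> L" "d b \<noteq> b"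
  and ij: "i < q" "j < q" shows "pw d i b \<noteq> z (pw d j b)"
proof (cases i j rule: linorder_cases)
  case less
  define y where "y = pw d j b"
  have yL: "y \<in> L" using pw_evL d b y_def by simp
  show ?thesis
  proof
    assume h: "pw d i b = z (pw d j b)"
    have "y = pw d (j - i) (pw d i b)" using pw_ev_add[of d b "j - i" i] d b less y_def by simp
    also have "\<dots> = pw d (j - i) (z y)" using h y_def by simp
    also have "\<dots> = z (pw d (j - i) y)" using pw_z d yL by simp
    finally have "z y = z (z (pw d (j - i) y))" by (rule arg_cong)
    then have "z y = pw d (j - i) y" using z_z pw_evL d yL by simp
    moreover have k: "0 < j - i" "j - i < q" using less ij by auto
    ultimately show False using H2[OF d b k, of j] y_def by simp
  qed
next
  case equal
  then show ?thesis using z_ne pw_evL d b by metis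
next
  case greater
  show ?thesis
  proof
    assume h: "pw d i b = z (pw d j b)"
    have "pw d i b = pw d (i - j) (pw d j b)" using pw_ev_add[of d b "i - j" j] d b greater by simp
    moreover have k: "0 < i - j" "i - j < q" using greater ij by auto
    ultimately show False using h H2[OF d b k, of j] by simp
  qed
qed

lemma FPF: assumes d: "d \<in> carrier G" "pw d q = gone" "d \<noteq> gone" and a: "a \<in> L" shows "d a \<noteq> a"
proof
  assume da: "d a = a"
  have Ra: "R a \<in> carrier G" using R_in a .
  define d' where "d' = gi (R a) \<star> d \<star> R a"
  have d'c: "d' \<in> carrier G" using Ra d d'_def by simp
  have d'conj: "d' = gi (R a) \<star> d \<star> gi (gi (R a))" using Ra d'_def by simp
  have d'q: "pw d' q = gone" using conj_q[of "gi (R a)" d] Ra d d'conj by simp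
  have d'ne: "d' \<noteq> gone" using conj_ne[of "gi (R a)" d] Ra d d'conj by simp
  have d'e: "d' e = e"
  proof -
    have "d' e = gi (R a) (d (R a e))" using d'_def Ra d eL ev_mult ev_closed by simp
    also have "\<dots> = gi (R a) (R a e)" using R_e_ev a da by simp
    also have "\<dots> = e" using ev_inv1 Ra eL by simp
    finally show ?thesis .
  qed
  have d'f: "d' f = f" using z_comm[OF d'c eL] d'e z_e by simp
  have all: "\<forall>b\<in>L. d' b = b"
  proof (rule ccontr)
    assume "\<not> (\<forall>b\<in>L. d' b = b)"
    then obtain b where b: "b \<in> L" "d' b \<noteq> b" by auto
    define P1 where "P1 = (\<lambda>i. pw d' i b) ` {..<q}"
    define P2 where "P2 = (\<lambda>i. z (pw d' i b)) ` {..<q}"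
    have inj1: "inj_on (\<lambda>i. pw d' i b) {..<q}"
    proof (rule inj_onI)
      fix i j assume ij: "i \<in> {..<q}" "j \<in> {..<q}" "pw d' i b = pw d' j b"
      show "i = j"
      proof (cases i j rule: linorder_cases)
        case less then show ?thesis using DIST1[OF d'c d'q b, of i j] ij by auto
      next
        case greater then show ?thesis using DIST1[OF d'c d'q b, of j i] ij by auto
      qed simp
    qed
    have inj2: "inj_on (\<lambda>i. z (pw d' i b)) {..<q}"
    proof (rule inj_onI)
      fix i j assume ij: "i \<in> {..<q}" "j \<in> {..<q}" "z (pw d' i b) = z (pw d' j b)"
      then have "pw d' i b = pw d' j b" using z_inj pw_evL d'c b by simp
      then show "i = j" using inj1 ij unfolding inj_on_def by blast
    qed
    have c1: "card P1 = q" using card_image[OF inj1] P1_def by simp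
    have c2: "card P2 = q" using card_image[OF inj2] P2_def by simp
    have disj: "P1 \<inter> P2 = {}" using DIST2[OF d'c d'q b] P1_def P2_def by auto
    have sub: "P1 \<union> P2 \<subseteq> L" using pw_evL z_L d'c b P1_def P2_def by auto
    have "card (P1 \<union> P2) = 2 * q"
      using card_Un_disjoint[of P1 P2] c1 c2 disj P1_def P2_def by simp
    then have "P1 \<union> P2 = L" using card_subset_eq[OF finL sub] cardL by simp
    then have "e \<in> P1 \<union> P2" using eL by simp
    then show False
    proof
      assume "e \<in> P1"
      then obtain i where i0: "e = pw d' i b" using P1_def by auto
      then have i: "pw d' i b = e" by simp
      have "pw d' i e = e" using pw_fix d'c eL d'e by simp
      then have "b = e" using ev_inj[of "pw d' i" b e] i d'c b eL by simp
      then show False using b d'e by simp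
    next
      assume "e \<in> P2"
      then obtain i where i0: "e = z (pw d' i b)" using P2_def by auto
      then have i: "z (pw d' i b) = e" by simp
      then have "pw d' i b = f" using z_z[of "pw d' i b"] pw_evL d'c b z_e by simp
      moreover have "pw d' i f = f" using pw_fix d'c fL d'f by simp
      ultimately have "b = f" using ev_inj[of "pw d' i" b f] d'c b fL by simp
      then show False using b d'f by simp
    qed
  qed
  then have "d' = gone" by (intro ext) (simp_all add: ev_one d'c)
  have "d = R a \<star> d' \<star> gi (R a)" using Ra d d'_def by (simp add: G.m_assoc)
  then have "d = gone" using \<open>d' = gone\<close> Ra by simp
  then show False using d by simp
qed

lemma NP: assumes d: "d \<in> carrier G" "pw d q = gone" "d \<noteq> gone" and i: "\<not> q dvd i" and a: "a \<in> L"
  shows "pw d i a \<noteq> a \<and> pw d i a \<noteq> z a"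
  using CT2[OF d(1,2) i a] lemX[OF d(1,2) i a] FPF[OF d a] by auto

definition Y0 where "Y0 = (\<lambda>i. pw c i e) ` {..<q}"
lemma c_e: "c e \<noteq> e" using FPF c_c c_q c_ne eL by simp
lemma Y0_L: "Y0 \<subseteq> L" using Y0_def pw_evL c_c eL by auto
lemma Y0_inj: "inj_on (\<lambda>i. pw c i e) {..<q}"
proof (rule inj_onI)
  fix i j assume ij: "i \<in> {..<q}" "j \<in> {..<q}" "pw c i e = pw c j e"
  show "i = j"
  proof (cases i j rule: linorder_cases)
    case less then show ?thesis using DIST1[OF c_c c_q eL c_e, of i j] ij by auto
  next
    case greater then show ?thesis using DIST1[OF c_c c_q eL c_e, of j i] ij by auto
  qed simp
qed
lemma Y0_card: "card Y0 = q" using card_image[OF Y0_inj] Y0_def by simp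
lemma finY0: "finite Y0" using Y0_def by simp
lemma Y0_disj: "Y0 \<inter> z ` Y0 = {}" using DIST2[OF c_c c_q eL c_e] Y0_def by auto
lemma zY0_card: "card (z ` Y0) = q"
proof -
  have "inj_on z Y0" using z_inj Y0_L by (auto intro: inj_onI)
  then show ?thesis using card_image Y0_card by metis
qed
lemma Y0_cover: "Y0 \<union> z ` Y0 = L"
proof -
  have sub: "Y0 \<union> z ` Y0 \<subseteq> L" using Y0_L z_L by auto
  have "card (Y0 \<union> z ` Y0) = 2 * q" using card_Un_disjoint[OF finY0 _ Y0_disj] finY0 Y0_card zY0_card by simp
  then show ?thesis using card_subset_eq[OF finL sub] cardL by simp
qed
lemma zY0_eq: "z ` Y0 = L - Y0" using Y0_cover Y0_disj by blast
lemma e_Y0: "e \<in> Y0"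
proof -
  have "pw c 0 e = e" using eL by (simp add: ev_one)
  then show ?thesis unfolding Y0_def using q_gt2 by (metis lessThan_iff gr_zeroI not_less0 image_eqI zero_less_iff_neq_zero)
qed
lemma pwY0: "pw c n e \<in> Y0"
proof -
  have "pw c n = pw c (n mod q)" using pw_mod c_c c_q by blast
  moreover have "n mod q < q" using q_gt2 by simp
  ultimately show ?thesis unfolding Y0_def by auto
qed
lemma L_cases: assumes "a \<in> L" shows "\<exists>i. a = pw c i e \<or> a = z (pw c i e)"
  using assms Y0_cover Y0_def by auto

lemma img_mult: "g \<in> carrier G \<Longrightarrow> h \<in> carrier G \<Longrightarrow> A \<subseteq> L \<Longrightarrow> (g \<star> h) ` A = g ` (h ` A)"
  using ev_mult by (auto simp: image_iff subset_iff) 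
lemma img_L: "g \<in> carrier G \<Longrightarrow> g ` L = L"
  using carr_Bij by (auto simp: Bij_def bij_betw_def)
lemma inj_L: "g \<in> carrier G \<Longrightarrow> inj_on g L"
  using carr_Bij by (auto simp: Bij_def bij_betw_def)
lemma img_diff: "g \<in> carrier G \<Longrightarrow> Y \<subseteq> L \<Longrightarrow> g ` (L - Y) = L - g ` Y"
  using inj_on_image_set_diff[OF inj_L, of g L Y] img_L by auto
lemma img_one: "A \<subseteq> L \<Longrightarrow> gone ` A = A"
  using ev_one by (auto simp: image_iff subset_iff)
lemma img_inv: assumes "g \<in> carrier G" "A \<subseteq> L" "g ` A = B" shows "gi g ` B = A"
proof -
  have "gi g ` B = (gi g \<star> g) ` A" using img_mult[of "gi g" g A] assms by simp
  then show ?thesis using img_one assms by simp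
qed

lemma endgame: assumes Y: "Y \<subseteq> L" "e \<in> Y" "card Y = q"
  and blk: "\<And>g. g \<in> carrier G \<Longrightarrow> g ` Y = Y \<or> g ` Y = L - Y"
  shows "\<exists>M. M \<lhd> G \<and> card (carrier G) = 2 * card (H <#>\<^bsub>G\<^esub> M)"
proof -
  define M where "M = {g \<in> carrier G. g ` Y = Y}"
  have LY: "L - Y \<subseteq> L" by auto
  have inv_im: "gi g ` Y = Y" if "g \<in> M" for g
    using img_inv[of g Y Y] that M_def Y by simp
  have sg: "subgroup M G"
  proof (rule G.subgroupI)
    show "M \<subseteq> carrier G" using M_def by auto
    have "gone \<in> M" using M_def img_one Y by simp
    then show "M \<noteq> {}" by auto
    show "gi a \<in> M" if "a \<in> M" for a using that inv_im M_def by simp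
    show "a \<star> b \<in> M" if "a \<in> M" "b \<in> M" for a b
      using that img_mult[of a b Y] Y M_def by simp
  qed
  have nrm: "M \<lhd> G"
  proof -
    have "x \<star> h \<star> gi x \<in> M" if x: "x \<in> carrier G" and h: "h \<in> M" for x h
    proof -
      have hc: "h \<in> carrier G" and hY: "h ` Y = Y" using h M_def by auto
      have xi: "gi x \<in> carrier G" using x by simp
      define Z where "Z = gi x ` Y"
      have giY: "Z \<subseteq> L" using ev_closed xi Y Z_def by auto
      have im: "(x \<star> h \<star> gi x) ` Y = x ` (h ` Z)"
        using img_mult[of "x \<star> h" "gi x" Y] img_mult[of x h Z] x hc xi Y giY Z_def by simp
      have bk: "x ` Z = Y" using img_inv[of "gi x" Y Z] x xi Y Z_def by simp
      from blk[OF xi] show ?thesis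
      proof
        assume "gi x ` Y = Y"
        then have "Z = Y" using Z_def by simp
        then show ?thesis using im hY bk x hc xi M_def by simp
      next
        assume a: "gi x ` Y = L - Y"
        then have a': "Z = L - Y" using Z_def by simp
        have "h ` (L - Y) = L - Y" using img_diff[OF hc Y(1)] hY by simp
        then show ?thesis using im a' bk x hc xi M_def by simp
      qed
    qed
    then show ?thesis using G.normal_inv_iff sg by blast
  qed
  have HM: "H \<subseteq> M"
  proof
    fix h assume h: "h \<in> H"
    then have hc: "h \<in> carrier G" and he: "h e = e" using H_iff by auto
    have "e \<in> h ` Y" using he Y(2) by (metis image_eqI)
    then have "h ` Y \<noteq> L - Y" using Y(2) by auto
    then show "h \<in> M" using blk[OF hc] hc M_def by auto
  qed
  have HMM: "H <#>\<^bsub>G\<^esub> M = M"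
  proof
    show "H <#>\<^bsub>G\<^esub> M \<subseteq> M"
      using HM subgroup.m_closed[OF sg] by (auto simp: set_mult_def)
    show "M \<subseteq> H <#>\<^bsub>G\<^esub> M"
    proof
      fix x assume x: "x \<in> M"
      have "gone \<in> H" using H_iff ev_one eL by simp
      moreover have "x = gone \<star> x" using x M_def by simp
      ultimately show "x \<in> H <#>\<^bsub>G\<^esub> M" using x unfolding set_mult_def by blast
    qed
  qed
  obtain a where a: "a \<in> L" "a \<notin> Y"
  proof -
    have "\<not> L \<subseteq> Y"
    proof
      assume "L \<subseteq> Y"
      then have "card L \<le> card Y" using card_mono finite_subset[OF Y(1) finL] by blast
      then show False using cardL Y(3) q_gt2 by simp
    qed
    then show ?thesis using that by blast
  qed
  define w where "w = R a"
  have wc: "w \<in> carrier G" using R_in a w_def by simp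
  have wY: "w ` Y = L - Y"
  proof -
    have "w e \<in> w ` Y" using Y(2) by simp
    then have "w ` Y \<noteq> Y" using a R_e_ev w_def by auto
    then show ?thesis using blk[OF wc] by simp
  qed
  have wiY: "gi w ` (L - Y) = Y" using img_inv[OF wc Y(1) wY] .
  have part: "carrier G = M \<union> (\<lambda>x. w \<star> x) ` M"
  proof
    show "carrier G \<subseteq> M \<union> (\<lambda>x. w \<star> x) ` M"
    proof
      fix g assume g: "g \<in> carrier G"
      show "g \<in> M \<union> (\<lambda>x. w \<star> x) ` M"
      proof (cases "g ` Y = Y")
        case True then show ?thesis using g M_def by simp
      next
        case False
        then have gY: "g ` Y = L - Y" using blk[OF g] by simp
        have "(gi w \<star> g) ` Y = Y" using img_mult[of "gi w" g Y] wc g Y gY wiY by simp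
        then have "gi w \<star> g \<in> M" using M_def wc g by simp
        moreover have "g = w \<star> (gi w \<star> g)" using wc g by simp
        ultimately show ?thesis by blast
      qed
    qed
    show "M \<union> (\<lambda>x. w \<star> x) ` M \<subseteq> carrier G" using M_def wc by auto
  qed
  have disj: "M \<inter> (\<lambda>x. w \<star> x) ` M = {}"
  proof (rule ccontr)
    assume "M \<inter> (\<lambda>x. w \<star> x) ` M \<noteq> {}"
    then obtain x where x: "x \<in> M" "w \<star> x \<in> M" by blast
    have "(w \<star> x) ` Y = L - Y" using img_mult[of w x Y] wc x M_def Y wY by simp
    then have "L - Y = Y" using x M_def by simp
    then show False using Y(2) by blast
  qed
  have injw: "inj_on (\<lambda>x. w \<star> x) M" using wc M_def by (auto intro!: inj_onI)
  have finM: "finite M" using M_def finG by simp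
  have "card (carrier G) = card M + card M"
    using part card_Un_disjoint[of M "(\<lambda>x. w \<star> x) ` M"] finM disj card_image[OF injw] by simp
  then show ?thesis using nrm HMM by (intro exI[of _ M]) simp
qed


lemma inv_comm: "x \<in> carrier G \<Longrightarrow> y \<in> carrier G \<Longrightarrow> x \<star> y = y \<star> x \<Longrightarrow> gi x \<star> y = y \<star> gi x"
proof -
  assume c: "x \<in> carrier G" "y \<in> carrier G" and h: "x \<star> y = y \<star> x"
  have "gi x \<star> y = gi x \<star> (y \<star> x) \<star> gi x" using c by (simp add: G.m_assoc)
  also have "\<dots> = gi x \<star> (x \<star> y) \<star> gi x" using h by simp
  also have "\<dots> = y \<star> gi x" using c by (simp add: G.m_assoc)
  finally show ?thesis .
qed
lemma conj_pres: "a \<in> carrier G \<Longrightarrow> u \<in> carrier G \<Longrightarrow> v \<in> carrier G \<Longrightarrow> u \<star> v = v \<star> u \<Longrightarrow>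
   (a \<star> u \<star> gi a) \<star> (a \<star> v \<star> gi a) = (a \<star> v \<star> gi a) \<star> (a \<star> u \<star> gi a)"
proof -
  assume c: "a \<in> carrier G" "u \<in> carrier G" "v \<in> carrier G" and h: "u \<star> v = v \<star> u"
  have "(a \<star> u \<star> gi a) \<star> (a \<star> v \<star> gi a) = a \<star> (u \<star> v) \<star> gi a" using c by (simp add: G.m_assoc)
  also have "\<dots> = a \<star> (v \<star> u) \<star> gi a" using h by simp
  also have "\<dots> = (a \<star> v \<star> gi a) \<star> (a \<star> u \<star> gi a)" using c by (simp add: G.m_assoc)
  finally show ?thesis .
qed
lemma conj_conj: "a \<in> carrier G \<Longrightarrow> b \<in> carrier G \<Longrightarrow> x \<in> carrier G \<Longrightarrow>
    a \<star> (b \<star> x \<star> gi b) \<star> gi a = (a \<star> b) \<star> x \<star> gi (a \<star> b)"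
  by (simp add: G.m_assoc G.inv_mult_group)
lemma conj_inv_back: "g \<in> carrier G \<Longrightarrow> x \<in> carrier G \<Longrightarrow> gi g \<star> (g \<star> x \<star> gi g) \<star> g = x"
  by (simp add: G.m_assoc)
lemma conj_ev: "g \<in> carrier G \<Longrightarrow> x \<in> carrier G \<Longrightarrow> a \<in> L \<Longrightarrow> (g \<star> x \<star> gi g) (g a) = g (x a)"
  using ev_mult ev_inv1 ev_closed by simp

lemma QN: assumes h: "\<And>g. g \<in> carrier G \<Longrightarrow> \<exists>i. g \<star> c \<star> gi g = pw c i"
  shows "\<exists>M. M \<lhd> G \<and> card (carrier G) = 2 * card (H <#>\<^bsub>G\<^esub> M)"
proof (rule endgame[OF Y0_L e_Y0 Y0_card])
  fix g assume g: "g \<in> carrier G"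
  obtain i where i: "g \<star> c \<star> gi g = pw c i" using h[OF g] by blast
  have ev: "g (pw c j e) = pw c (i * j) (g e)" for j
  proof -
    have "g (pw c j e) = (g \<star> pw c j \<star> gi g) (g e)" using conj_ev g c_c eL by simp
    also have "\<dots> = pw (g \<star> c \<star> gi g) j (g e)" using pw_conj g c_c by simp
    finally show ?thesis using i c_c by (simp add: G.nat_pow_pow)
  qed
  have ge: "g e \<in> L" using g eL ev_closed by simp
  have cardg: "card (g ` Y0) = q"
    using card_image[of g Y0] inj_on_subset[OF inj_L[OF g] Y0_L] Y0_card by simp
  obtain k where k: "g e = pw c k e \<or> g e = z (pw c k e)" using L_cases[OF ge] by blast
  then show "g ` Y0 = Y0 \<or> g ` Y0 = L - Y0"
  proof
    assume gk: "g e = pw c k e"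
    have "g ` Y0 \<subseteq> Y0"
    proof
      fix y assume "y \<in> g ` Y0"
      then obtain j where y: "y = g (pw c j e)" using Y0_def by auto
      have "y = pw c (i * j) (pw c k e)" using y ev gk by simp
      also have "\<dots> = pw c (i * j + k) e" using pw_ev_add c_c eL by simp
      finally show "y \<in> Y0" using pwY0 by simp
    qed
    then have "g ` Y0 = Y0" using card_subset_eq[OF finY0] cardg Y0_card by simp
    then show ?thesis by simp
  next
    assume gk: "g e = z (pw c k e)"
    have "g ` Y0 \<subseteq> z ` Y0"
    proof
      fix y assume "y \<in> g ` Y0"
      then obtain j where y: "y = g (pw c j e)" using Y0_def by auto
      have "y = pw c (i * j) (z (pw c k e))" using y ev gk by simp
      also have "\<dots> = z (pw c (i * j + k) e)" using pw_z pw_ev_add c_c eL pw_evL by simp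
      finally show "y \<in> z ` Y0" using pwY0 by simp
    qed
    moreover have "finite (z ` Y0)" using finY0 by simp
    ultimately have "g ` Y0 = z ` Y0" using card_subset_eq cardg zY0_card by metis
    then show ?thesis using zY0_eq by simp
  qed
qed

lemma orbit_block:
  assumes Nc: "N \<subseteq> carrier G" and N1: "gone \<in> N"
    and Nm: "\<And>x y. x \<in> N \<Longrightarrow> y \<in> N \<Longrightarrow> x \<star> y \<in> N"
    and Ni: "\<And>x. x \<in> N \<Longrightarrow> gi x \<in> N"
    and Nconj: "\<And>g x. g \<in> carrier G \<Longrightarrow> x \<in> N \<Longrightarrow> g \<star> x \<star> gi g \<in> N"
    and big: "q \<le> card ((\<lambda>x. x e) ` N)" and ne: "(\<lambda>x. x e) ` N \<noteq> L"
  shows "\<exists>M. M \<lhd> G \<and> card (carrier G) = 2 * card (H <#>\<^bsub>G\<^esub> M)"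
proof -
  define Y where "Y = (\<lambda>x. x e) ` N"
  have YL: "Y \<subseteq> L" using Y_def Nc ev_closed eL by auto
  have eY: "e \<in> Y" unfolding Y_def
  proof (rule image_eqI)
    show "e = gone e" using ev_one eL by simp
    show "gone \<in> N" using N1 .
  qed
  have finY: "finite Y" using YL finL finite_subset by blast
  have orb: "g ` Y = (\<lambda>x. x (g e)) ` N" if g: "g \<in> carrier G" for g
  proof
    show "g ` Y \<subseteq> (\<lambda>x. x (g e)) ` N"
    proof
      fix y assume "y \<in> g ` Y"
      then obtain x where x: "x \<in> N" "y = g (x e)" using Y_def by auto
      have "y = (g \<star> x \<star> gi g) (g e)" using conj_ev g x Nc eL by auto
      moreover have "g \<star> x \<star> gi g \<in> N" using Nconj g x by simp
      ultimately show "y \<in> (\<lambda>x. x (g e)) ` N" by blast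
    qed
    show "(\<lambda>x. x (g e)) ` N \<subseteq> g ` Y"
    proof
      fix y assume "y \<in> (\<lambda>x. x (g e)) ` N"
      then obtain x where x: "x \<in> N" "y = x (g e)" by auto
      have xc: "x \<in> carrier G" using x Nc by auto
      define x' where "x' = gi g \<star> x \<star> gi (gi g)"
      have x'N: "x' \<in> N" using Nconj[of "gi g" x] g x x'_def by simp
      have "x' = gi g \<star> x \<star> g" using x'_def g by simp
      then have "g (x' e) = x (g e)" using g xc eL ev_mult ev_inv2 ev_closed by simp
      then show "y \<in> g ` Y" using x x'N Y_def by force
    qed
  qed
  have cardo: "card (g ` Y) = card Y" if g: "g \<in> carrier G" for g
    using card_image[of g Y] inj_on_subset[OF inj_L[OF g] YL] by simp
  have disj: "g ` Y \<inter> Y = {}" if g: "g \<in> carrier G" "g e \<notin> Y" for g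
  proof (rule ccontr)
    assume "g ` Y \<inter> Y \<noteq> {}"
    then obtain y where y: "y \<in> g ` Y" "y \<in> Y" by blast
    obtain x where x: "x \<in> N" "y = x (g e)" using y(1) orb[OF g(1)] by auto
    obtain x2 where x2: "x2 \<in> N" "y = x2 e" using y(2) Y_def by auto
    have xc: "x \<in> carrier G" "x2 \<in> carrier G" using x x2 Nc by auto
    have "g e = gi x (x2 e)" using x x2 ev_inv1[OF xc(1)] g eL ev_closed by metis
    also have "\<dots> = (gi x \<star> x2) e" using xc eL ev_mult by simp
    finally have "g e \<in> Y" using Ni Nm x x2 Y_def by auto
    then show False using g by simp
  qed
  have sub: "g ` Y \<subseteq> Y" if g: "g \<in> carrier G" "g e \<in> Y" for g
  proof
    fix y assume "y \<in> g ` Y"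
    then obtain x where x: "x \<in> N" "y = x (g e)" using orb[OF g(1)] by auto
    obtain x2 where x2: "x2 \<in> N" "g e = x2 e" using g(2) Y_def by auto
    have xc: "x \<in> carrier G" "x2 \<in> carrier G" using x x2 Nc by auto
    have "y = (x \<star> x2) e" using x x2 xc eL ev_mult by simp
    then show "y \<in> Y" using Nm x x2 Y_def by auto
  qed
  obtain b where b: "b \<in> L" "b \<notin> Y" using ne YL Y_def by blast
  have Rb: "R b \<in> carrier G" using R_in b by simp
  have "R b e \<notin> Y" using R_e_ev b by simp
  then have dj: "R b ` Y \<inter> Y = {}" using disj[OF Rb] by simp
  have "R b ` Y \<subseteq> L" using ev_closed[OF Rb] YL by auto
  then have sbb: "R b ` Y \<subseteq> L - Y" using dj by blast
  have fLY: "finite (L - Y)" using finL by simp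
  have "card (R b ` Y) \<le> card (L - Y)" by (rule card_mono[OF fLY sbb])
  moreover have "card (L - Y) = 2 * q - card Y" using card_Diff_subset[OF finY YL] cardL by simp
  ultimately have "card Y \<le> q" using cardo[OF Rb] by simp
  then have cY: "card Y = q" using big Y_def by simp
  have cLY: "card (L - Y) = q" using card_Diff_subset[OF finY YL] cardL cY by simp
  show ?thesis
  proof (rule endgame[OF YL eY cY])
    fix g assume g: "g \<in> carrier G"
    show "g ` Y = Y \<or> g ` Y = L - Y"
    proof (cases "g e \<in> Y")
      case True
      then show ?thesis using sub[OF g True] card_subset_eq[OF finY] cardo[OF g] by simp
    next
      case False
      have dj: "g ` Y \<inter> Y = {}" using disj[OF g False] .
      have "g ` Y \<subseteq> L" using ev_closed[OF g] YL by auto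
      then have "g ` Y \<subseteq> L - Y" using dj by blast
      then have "g ` Y = L - Y" using card_subset_eq[of "L - Y" "g ` Y"] finL cardo[OF g] cY cLY by simp
      then show ?thesis by simp
    qed
  qed
qed

definition CT where "CT d = {t \<in> T. t \<star> d = d \<star> t}"
definition Orb where "Orb d t = (\<lambda>i. pw d i \<star> t \<star> gi (pw d i)) ` {..<q}"

lemma CT_T: "CT d \<subseteq> T" by (auto simp: CT_def)
lemma one_CT: "d \<in> carrier G \<Longrightarrow> gone \<in> CT d" using one_T by (simp add: CT_def)
lemma finT: "finite T" using T_carr finG finite_subset by blast

lemma comm_back: assumes "a \<in> carrier G" "x \<in> carrier G" "d \<in> carrier G" "a \<star> d = d \<star> a"
  "(a \<star> x \<star> gi a) \<star> d = d \<star> (a \<star> x \<star> gi a)" shows "x \<star> d = d \<star> x"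
proof -
  have ai: "gi a \<star> d = d \<star> gi a" using inv_comm assms by simp
  have "(gi a \<star> (a \<star> x \<star> gi a) \<star> gi (gi a)) \<star> (gi a \<star> d \<star> gi (gi a))
     = (gi a \<star> d \<star> gi (gi a)) \<star> (gi a \<star> (a \<star> x \<star> gi a) \<star> gi (gi a))"
    using conj_pres[of "gi a" "a \<star> x \<star> gi a" d] assms by simp
  moreover have "gi a \<star> d \<star> gi (gi a) = d" using ai assms by (simp add: G.m_assoc)
  moreover have "gi a \<star> (a \<star> x \<star> gi a) \<star> gi (gi a) = x" using assms by (simp add: G.m_assoc)
  ultimately show ?thesis by simp
qed

lemma comm_fwd: assumes "a \<in> carrier G" "x \<in> carrier G" "d \<in> carrier G" "a \<star> d = d \<star> a"
  "x \<star> d = d \<star> x" shows "(a \<star> x \<star> gi a) \<star> d = d \<star> (a \<star> x \<star> gi a)"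
proof -
  have e1: "(a \<star> x \<star> gi a) \<star> (a \<star> d \<star> gi a) = (a \<star> d \<star> gi a) \<star> (a \<star> x \<star> gi a)"
    by (rule conj_pres[OF assms(1) assms(2) assms(3) assms(5)])
  have "a \<star> d \<star> gi a = d \<star> a \<star> gi a" using assms(4) by simp
  also have "\<dots> = d" using assms(1,3) by (simp add: G.m_assoc)
  finally have e2: "a \<star> d \<star> gi a = d" .
  show ?thesis using e1 unfolding e2 .
qed

lemma pw_self_comm: "d \<in> carrier G \<Longrightarrow> pw d i \<star> d = d \<star> pw d i"
  using pw_comm[of d d i] by simp

context
  fixes d assumes d: "d \<in> carrier G" "pw d q = gone" "d \<noteq> gone"
begin

lemma Orb_sub: assumes t: "t \<in> T - CT d" shows "Orb d t \<subseteq> T - CT d"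
proof
  fix s assume "s \<in> Orb d t"
  then obtain i where s: "s = pw d i \<star> t \<star> gi (pw d i)" using Orb_def by auto
  have tc: "t \<in> carrier G" using t T_carr by auto
  have sT: "s \<in> T" using conjT[of "pw d i" t] t d s by simp
  have "s \<notin> CT d"
  proof
    assume "s \<in> CT d"
    then have "s \<star> d = d \<star> s" by (simp add: CT_def)
    then have "t \<star> d = d \<star> t" using comm_back[of "pw d i" t d] d tc pw_self_comm s by simp
    then show False using t CT_def by simp
  qed
  then show "s \<in> T - CT d" using sT by simp
qed

lemma Orb_card: assumes t: "t \<in> T - CT d" shows "card (Orb d t) = q"
proof -
  have tc: "t \<in> carrier G" using t T_carr by auto
  have "inj_on (\<lambda>i. pw d i \<star> t \<star> gi (pw d i)) {..<q}"
  proof (rule inj_onI)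
    fix i j assume ij: "i \<in> {..<q}" "j \<in> {..<q}"
      "pw d i \<star> t \<star> gi (pw d i) = pw d j \<star> t \<star> gi (pw d j)"
    have gen: "False" if lt: "a < b" "b < q" and eq: "pw d a \<star> t \<star> gi (pw d a) = pw d b \<star> t \<star> gi (pw d b)" for a b
    proof -
      define s where "s = pw d a \<star> t \<star> gi (pw d a)"
      have sc: "s \<in> carrier G" using s_def d tc by simp
      have pb: "pw d b = pw d (b - a) \<star> pw d a" using G.nat_pow_mult[of d "b - a" a] d lt by simp
      have "pw d b \<star> t \<star> gi (pw d b) = pw d (b - a) \<star> s \<star> gi (pw d (b - a))"
        using conj_conj[of "pw d (b - a)" "pw d a" t] pb d tc s_def by simp
      then have "pw d (b - a) \<star> s \<star> gi (pw d (b - a)) = s" using eq s_def by simp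
      then have "pw d (b - a) \<star> s = s \<star> pw d (b - a)" using conj_comm d sc by simp
      moreover have "\<not> q dvd (b - a)" using lt by (auto dest: dvd_imp_le)
      ultimately have "d \<star> s = s \<star> d" using CT1[of d s "b - a"] d sc by simp
      then have "t \<star> d = d \<star> t" using comm_back[of "pw d a" t d] d tc pw_self_comm s_def by simp
      then show False using t CT_def by simp
    qed
    show "i = j"
    proof (cases i j rule: linorder_cases)
      case less then show ?thesis using gen[of i j] ij by auto
    next
      case greater then show ?thesis using gen[of j i] ij by auto
    qed simp
  qed
  then show ?thesis using card_image Orb_def by fastforce
qed

lemma Orb_self: "t \<in> carrier G \<Longrightarrow> t \<in> Orb d t"
proof -
  assume "t \<in> carrier G"
  then have "t = pw d 0 \<star> t \<star> gi (pw d 0)" by simp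
  moreover have "0 \<in> {..<q}" using q_gt2 by simp
  ultimately show ?thesis unfolding Orb_def by blast
qed

lemma Orb_closed: assumes t: "t \<in> carrier G" and s: "s \<in> Orb d t" shows "Orb d s \<subseteq> Orb d t"
proof
  fix y assume "y \<in> Orb d s"
  then obtain k where y: "y = pw d k \<star> s \<star> gi (pw d k)" using Orb_def by auto
  obtain i where si: "s = pw d i \<star> t \<star> gi (pw d i)" using s Orb_def by auto
  have "y = pw d (k + i) \<star> t \<star> gi (pw d (k + i))"
    using y si conj_conj[of "pw d k" "pw d i" t] d t G.nat_pow_mult[of d k i] by simp
  also have "pw d (k + i) = pw d ((k + i) mod q)" using pw_mod d by blast
  finally have "y = pw d ((k + i) mod q) \<star> t \<star> gi (pw d ((k + i) mod q))" .
  moreover have "(k + i) mod q < q" using q_gt2 by simp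
  ultimately show "y \<in> Orb d t" unfolding Orb_def by blast
qed

lemma Orb_eq: assumes t: "t \<in> T - CT d" and s: "s \<in> Orb d t" shows "Orb d s = Orb d t"
proof -
  have tc: "t \<in> carrier G" using t T_carr by auto
  have sT: "s \<in> T - CT d" using Orb_sub[OF t] s by auto
  have sc: "s \<in> carrier G" using sT T_carr by auto
  have "Orb d s \<subseteq> Orb d t" using Orb_closed[OF tc s] .
  moreover have "finite (Orb d t)" using Orb_def by simp
  ultimately show ?thesis using card_subset_eq Orb_card[OF t] Orb_card[OF sT] by metis
qed

lemma CT_main: assumes t: "t \<in> T - CT d" shows "T - CT d = Orb d t"
proof
  show "Orb d t \<subseteq> T - CT d" using Orb_sub[OF t] .
  show "T - CT d \<subseteq> Orb d t"
  proof
    fix t' assume t': "t' \<in> T - CT d"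
    show "t' \<in> Orb d t"
    proof (rule ccontr)
      assume nt: "t' \<notin> Orb d t"
      have t'c: "t' \<in> carrier G" using t' T_carr by auto
      have dj: "Orb d t \<inter> Orb d t' = {}"
      proof (rule ccontr)
        assume "Orb d t \<inter> Orb d t' \<noteq> {}"
        then obtain s where s: "s \<in> Orb d t" "s \<in> Orb d t'" by blast
        have "Orb d t' = Orb d t" using Orb_eq[OF t s(1)] Orb_eq[OF t' s(2)] by simp
        then show False using nt Orb_self[OF t'c] by simp
      qed
      have sub: "Orb d t \<union> Orb d t' \<subseteq> T - {gone}"
        using Orb_sub[OF t] Orb_sub[OF t'] one_CT d by auto
      have "card (Orb d t \<union> Orb d t') = q + q"
        using card_Un_disjoint[of "Orb d t" "Orb d t'"] dj Orb_card[OF t] Orb_card[OF t'] Orb_def by simp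
      moreover have "card (T - {gone}) = 2 * q - 1" using card_T one_T finT by simp
      moreover have fT1: "finite (T - {gone})" using finT by simp
      moreover have "card (Orb d t \<union> Orb d t') \<le> card (T - {gone})" by (rule card_mono[OF fT1 sub])
      ultimately show False using q_gt2 by linarith
    qed
  qed
qed

lemma CT_card: "q \<le> card (CT d)"
proof (cases "T - CT d = {}")
  case True
  then have "CT d = T" using CT_T by auto
  then show ?thesis using card_T by simp
next
  case False
  then obtain t where t: "t \<in> T - CT d" by blast
  have "card (T - CT d) = q" using CT_main[OF t] Orb_card[OF t] by simp
  moreover have "card (T - CT d) = card T - card (CT d)" using card_Diff_subset[OF _ CT_T] finT finite_subset[OF CT_T] by simp
  ultimately show ?thesis using card_T by simp
qed

lemma CT_card_eq: assumes "T - CT d \<noteq> {}" shows "card (CT d) = q" "card (T - CT d) = q"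
proof -
  obtain t where t: "t \<in> T - CT d" using assms by blast
  show c1: "card (T - CT d) = q" using CT_main[OF t] Orb_card[OF t] by simp
  have "card (T - CT d) = card T - card (CT d)" using card_Diff_subset[OF _ CT_T] finT finite_subset[OF CT_T] by simp
  moreover have "card (CT d) \<le> card T" by (rule card_mono[OF finT CT_T])
  ultimately show "card (CT d) = q" using c1 card_T CT_card by linarith
qed

end


lemma Rf_T: "R f \<in> T" using R_T fL .
lemma pw_inv: "x \<in> carrier G \<Longrightarrow> pw x q = gone \<Longrightarrow> j \<le> q \<Longrightarrow> gi (pw x j) = pw x (q - j)"
proof -
  assume h: "x \<in> carrier G" "pw x q = gone" "j \<le> q"
  have "pw x (q - j) \<star> pw x j = pw x (q - j + j)" using G.nat_pow_mult h by simp
  also have "\<dots> = gone" using h by simp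
  finally show ?thesis using G.inv_equality h by simp
qed

definition Cen where "Cen = {g \<in> carrier G. g \<star> R f = R f \<star> g}"
lemma Cen_sg: "subgroup Cen G"
proof (rule G.subgroupI)
  show "Cen \<subseteq> carrier G" using Cen_def by auto
  have "gone \<in> Cen" using Cen_def Rf_c by simp
  then show "Cen \<noteq> {}" by auto
  show "gi a \<in> Cen" if "a \<in> Cen" for a using that inv_comm Rf_c Cen_def by simp
  show "a \<star> b \<in> Cen" if "a \<in> Cen" "b \<in> Cen" for a b
  proof -
    have c: "a \<in> carrier G" "b \<in> carrier G" "a \<star> R f = R f \<star> a" "b \<star> R f = R f \<star> b" using that Cen_def by auto
    have "a \<star> b \<star> R f = a \<star> (b \<star> R f)" using c(1,2) Rf_c by (simp add: G.m_assoc)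
    also have "\<dots> = a \<star> (R f \<star> b)" using c(4) by simp
    also have "\<dots> = (a \<star> R f) \<star> b" using c(1,2) Rf_c by (simp add: G.m_assoc)
    also have "\<dots> = (R f \<star> a) \<star> b" using c(3) by simp
    also have "\<dots> = R f \<star> (a \<star> b)" using c(1,2) Rf_c by (simp add: G.m_assoc)
    finally show ?thesis using c Cen_def by simp
  qed
qed
lemma K_Cen: "K \<subseteq> Cen"
proof
  fix k assume k: "k \<in> K"
  then have kc: "k \<in> carrier G" and ke: "k e = e \<or> k e = f" using K_iff by auto
  from ke show "k \<in> Cen"
  proof
    assume "k e = e"
    then have "k \<in> H" using H_iff kc by simp
    then show ?thesis using H_comm_Rf kc Cen_def by simp
  next
    assume kf: "k e = f"
    have wH: "gi (R f) \<star> k \<in> H" using decomp[OF kc] kf by simp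
    define w where "w = gi (R f) \<star> k"
    have wc: "w \<in> carrier G" using wH w_def H_carr by auto
    have kw: "k = R f \<star> w" using w_def kc Rf_c by simp
    have "k \<star> R f = R f \<star> (w \<star> R f)" using kw wc Rf_c by (simp add: G.m_assoc)
    also have "\<dots> = R f \<star> (R f \<star> w)" using H_comm_Rf wH w_def by simp
    also have "\<dots> = R f \<star> k" using kw by simp
    finally show ?thesis using kc Cen_def by simp
  qed
qed

lemma cardK_pos: "0 < card K"
proof -
  have "gone \<in> K" using subgroup.one_closed[OF sgK] by simp
  then show ?thesis using finK card_gt_0_iff by blast
qed

lemma Cen_cases: "Cen = K \<or> Cen = carrier G"
proof -
  have grpC: "group (G\<lparr>carrier := Cen\<rparr>)" using subgroup.subgroup_is_group[OF Cen_sg grpG] .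
  have sgKC: "subgroup K (G\<lparr>carrier := Cen\<rparr>)" using G.subgroup_incl[OF sgK Cen_sg K_Cen] .
  obtain a where a: "a * card K = card Cen"
    using group.lagrange[OF grpC sgKC] by (auto simp: order_def)
  obtain b where b: "b * card Cen = card (carrier G)"
    using G.lagrange[OF Cen_sg] by (auto simp: order_def)
  have "b * a * card K = q * card K" using a b cardG by (simp add: mult.assoc)
  then have ba: "b * a = q" using cardK_pos by simp
  then have "a dvd q" by (metis dvd_triv_right)
  then have "a = 1 \<or> a = q" using prime_q prime_nat_iff by blast
  moreover have finC: "finite Cen" using Cen_def finG by simp
  moreover have "Cen \<subseteq> carrier G" using Cen_def by auto
  ultimately show ?thesis
  proof (elim disjE)
    assume "a = 1"
    then have "card K = card Cen" using a by simp
    then show ?thesis using card_subset_eq[OF finC K_Cen] by simp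
  next
    assume "a = q"
    then have "card Cen = card (carrier G)" using a cardG by simp
    then show ?thesis using card_subset_eq[OF finG] \<open>Cen \<subseteq> carrier G\<close> by simp
  qed
qed

definition Ncen where "Ncen = {x \<in> carrier G. \<forall>g\<in>carrier G. x \<star> (g \<star> c \<star> gi g) = (g \<star> c \<star> gi g) \<star> x}"

lemma N_sub: "Ncen \<subseteq> carrier G" using Ncen_def by auto
lemma N_one: "gone \<in> Ncen" using Ncen_def c_c by simp
lemma N_mult: assumes "x \<in> Ncen" "y \<in> Ncen" shows "x \<star> y \<in> Ncen"
proof -
  have c: "x \<in> carrier G" "y \<in> carrier G" using assms Ncen_def by auto
  have "x \<star> y \<star> (g \<star> c \<star> gi g) = (g \<star> c \<star> gi g) \<star> (x \<star> y)" if g: "g \<in> carrier G" for g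
  proof -
    have hx: "x \<star> (g \<star> c \<star> gi g) = (g \<star> c \<star> gi g) \<star> x" and hy: "y \<star> (g \<star> c \<star> gi g) = (g \<star> c \<star> gi g) \<star> y"
      using assms g Ncen_def by auto
    have gc: "g \<star> c \<star> gi g \<in> carrier G" using g c_c by simp
    have "x \<star> y \<star> (g \<star> c \<star> gi g) = x \<star> (y \<star> (g \<star> c \<star> gi g))" using c gc by (simp add: G.m_assoc)
    also have "\<dots> = (x \<star> (g \<star> c \<star> gi g)) \<star> y" using hy c gc by (simp add: G.m_assoc)
    also have "\<dots> = (g \<star> c \<star> gi g) \<star> (x \<star> y)" using hx c gc by (simp add: G.m_assoc)
    finally show ?thesis .
  qed
  then show ?thesis using c Ncen_def by simp
qed
lemma N_inv: assumes "x \<in> Ncen" shows "gi x \<in> Ncen"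
proof -
  have c: "x \<in> carrier G" using assms Ncen_def by auto
  have "gi x \<star> (g \<star> c \<star> gi g) = (g \<star> c \<star> gi g) \<star> gi x" if g: "g \<in> carrier G" for g
    using inv_comm[of x "g \<star> c \<star> gi g"] c g c_c assms Ncen_def by simp
  then show ?thesis using c Ncen_def by simp
qed
lemma N_conj: assumes h: "h \<in> carrier G" and x: "x \<in> Ncen" shows "h \<star> x \<star> gi h \<in> Ncen"
proof -
  have xc: "x \<in> carrier G" using x Ncen_def by auto
  have "(h \<star> x \<star> gi h) \<star> (g \<star> c \<star> gi g) = (g \<star> c \<star> gi g) \<star> (h \<star> x \<star> gi h)" if g: "g \<in> carrier G" for g
  proof -
    define g' where "g' = gi h \<star> g"
    have g'c: "g' \<in> carrier G" using g'_def h g by simp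
    have "x \<star> (g' \<star> c \<star> gi g') = (g' \<star> c \<star> gi g') \<star> x" using x g'c Ncen_def by auto
    then have "(h \<star> x \<star> gi h) \<star> (h \<star> (g' \<star> c \<star> gi g') \<star> gi h) = (h \<star> (g' \<star> c \<star> gi g') \<star> gi h) \<star> (h \<star> x \<star> gi h)"
      using conj_pres[of h x "g' \<star> c \<star> gi g'"] h xc g'c c_c by simp
    moreover have "h \<star> (g' \<star> c \<star> gi g') \<star> gi h = g \<star> c \<star> gi g"
      using conj_conj[of h g' c] h g'c c_c g g'_def by simp
    ultimately show ?thesis by simp
  qed
  then show ?thesis using h xc Ncen_def by simp
qed

lemma Cz_pw: assumes "y \<in> carrier G" "\<forall>x\<in>Ncen. y \<star> x = x \<star> y" shows "\<forall>x\<in>Ncen. pw y n \<star> x = x \<star> pw y n"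
  using pw_comm assms N_sub by blast

context
  assumes nc: "\<exists>g\<in>carrier G. g \<star> R f \<noteq> R f \<star> g"
begin

lemma Cen_K: "Cen = K"
proof -
  have "Cen \<noteq> carrier G" using nc Cen_def by auto
  then show ?thesis using Cen_cases by simp
qed

lemma A2: assumes g: "g \<in> carrier G" shows "g \<star> R f \<star> gi g \<notin> CT c"
proof
  assume "g \<star> R f \<star> gi g \<in> CT c"
  then have h: "(g \<star> R f \<star> gi g) \<star> c = c \<star> (g \<star> R f \<star> gi g)" by (simp add: CT_def)
  define c' where "c' = gi g \<star> c \<star> gi (gi g)"
  have c'c: "c' \<in> carrier G" using c'_def g c_c by simp
  have "(gi g \<star> (g \<star> R f \<star> gi g) \<star> gi (gi g)) \<star> c' = c' \<star> (gi g \<star> (g \<star> R f \<star> gi g) \<star> gi (gi g))"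
    using conj_pres[of "gi g" "g \<star> R f \<star> gi g" c] h g Rf_c c_c c'_def by simp
  moreover have "gi g \<star> (g \<star> R f \<star> gi g) \<star> gi (gi g) = R f" using g Rf_c by (simp add: G.m_assoc)
  ultimately have "c' \<star> R f = R f \<star> c'" by simp
  then have "c' \<in> K" using Cen_K Cen_def c'c by auto
  then have ce: "c' e = e \<or> c' e = f" using K_iff by simp
  have "pw c' q = gone" using conj_q[of "gi g" c] g c_c c_q c'_def by simp
  moreover have "c' \<noteq> gone" using conj_ne[of "gi g" c] g c_c c_ne c'_def by simp
  moreover have "\<not> q dvd Suc 0" using q_gt2 by simp
  ultimately have "pw c' (Suc 0) e \<noteq> e \<and> pw c' (Suc 0) e \<noteq> z e" using NP[OF c'c] eL by blast
  then show False using ce z_e c'c by simp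
qed

lemma Rf_notCT: "R f \<in> T - CT c" using A2[of gone] Rf_T Rf_c by simp

lemma A3: assumes g: "g \<in> carrier G" and t: "t \<in> CT c" shows "g \<star> t \<star> gi g \<in> CT c"
proof (rule ccontr)
  assume ns: "g \<star> t \<star> gi g \<notin> CT c"
  have tc: "t \<in> carrier G" using t CT_T T_carr by auto
  have "g \<star> t \<star> gi g \<in> T" using conjT g t CT_T by auto
  then have "g \<star> t \<star> gi g \<in> T - CT c" using ns by simp
  then have "g \<star> t \<star> gi g \<in> Orb c (R f)" using CT_main[OF c_c c_q c_ne Rf_notCT] by simp
  then obtain i where i: "g \<star> t \<star> gi g = pw c i \<star> R f \<star> gi (pw c i)" using Orb_def by auto
  have "t = gi g \<star> (g \<star> t \<star> gi g) \<star> gi (gi g)" using g tc by (simp add: G.m_assoc)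
  also have "\<dots> = gi g \<star> (pw c i \<star> R f \<star> gi (pw c i)) \<star> gi (gi g)" using i by simp
  also have "\<dots> = (gi g \<star> pw c i) \<star> R f \<star> gi (gi g \<star> pw c i)"
    using conj_conj[of "gi g" "pw c i" "R f"] g c_c Rf_c by simp
  finally have "t \<notin> CT c" using A2[of "gi g \<star> pw c i"] g c_c by simp
  then show False using t by simp
qed

lemma CT_N: "CT c \<subseteq> Ncen"
proof
  fix t assume t: "t \<in> CT c"
  have tc: "t \<in> carrier G" using t CT_T T_carr by auto
  have "t \<star> (g \<star> c \<star> gi g) = (g \<star> c \<star> gi g) \<star> t" if g: "g \<in> carrier G" for g
  proof -
    define t' where "t' = gi g \<star> t \<star> gi (gi g)"
    have "t' \<in> CT c" using A3[of "gi g" t] g t t'_def by simp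
    then have h: "t' \<star> c = c \<star> t'" by (simp add: CT_def)
    have t'c: "t' \<in> carrier G" using t'_def g tc by simp
    have "(g \<star> t' \<star> gi g) \<star> (g \<star> c \<star> gi g) = (g \<star> c \<star> gi g) \<star> (g \<star> t' \<star> gi g)"
      using conj_pres[of g t' c] g t'c c_c h by simp
    moreover have "g \<star> t' \<star> gi g = t" using t'_def g tc by (simp add: G.m_assoc)
    ultimately show ?thesis by simp
  qed
  then show "t \<in> Ncen" using tc Ncen_def by simp
qed

lemma dvd_range: assumes "q dvd (l + (q - j))" "l < q" "j < q" shows "l = j"
proof -
  obtain k where k: "l + (q - j) = q * k" using assms(1) by (auto simp: dvd_def)
  have "k \<noteq> 0"
  proof
    assume "k = 0" with k have "l + (q - j) = 0" by simp
    with assms(3) show False by simp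
  qed
  moreover have "k < 2"
  proof (rule ccontr)
    assume "\<not> k < 2"
    then have h2: "q * 2 \<le> q * k" by simp
    have h1: "l + (q - j) < q * 2" using assms(2,3) by simp
    show False using h1 h2 k by linarith
  qed
  ultimately have "k = 1" by simp
  then show ?thesis using k assms by simp
qed

lemma caseA: "\<exists>M. M \<lhd> G \<and> card (carrier G) = 2 * card (H <#>\<^bsub>G\<^esub> M)"
proof -
  define Y where "Y = (\<lambda>x. x e) ` Ncen"
  have YL: "Y \<subseteq> L" using Y_def N_sub ev_closed eL by auto
  have "(\<lambda>t. t e) ` CT c \<subseteq> Y" using CT_N Y_def by auto
  moreover have "card ((\<lambda>t. t e) ` CT c) = card (CT c)"
    by (rule card_image) (use T_unique CT_T in \<open>auto intro!: inj_onI\<close>)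
  moreover have "finite Y" using YL finL finite_subset by blast
  ultimately have big: "q \<le> card Y" using CT_card[OF c_c c_q c_ne] card_mono by (metis order_trans)
  show ?thesis
  proof (cases "Y = L")
    case False
    then show ?thesis using orbit_block[OF N_sub N_one N_mult N_inv N_conj] big Y_def by simp
  next
    case True
    show ?thesis
    proof (rule QN)
      fix g assume g: "g \<in> carrier G"
      show "\<exists>i. g \<star> c \<star> gi g = pw c i"
      proof (rule ccontr)
        assume nc': "\<not> (\<exists>i. g \<star> c \<star> gi g = pw c i)"
        define c' where "c' = g \<star> c \<star> gi g"
        have c'c: "c' \<in> carrier G" using c'_def g c_c by simp
        have c'q: "pw c' q = gone" using conj_q g c_c c_q c'_def by simp
        define Cz where "Cz = {y \<in> carrier G. \<forall>x\<in>Ncen. y \<star> x = x \<star> y}"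
        have Cz_m: "u \<star> v \<in> Cz" if "u \<in> Cz" "v \<in> Cz" for u v
        proof -
          have c: "u \<in> carrier G" "v \<in> carrier G" using that Cz_def by auto
          have "u \<star> v \<star> x = x \<star> (u \<star> v)" if x: "x \<in> Ncen" for x
          proof -
            have xc: "x \<in> carrier G" using x N_sub by auto
            have "u \<star> v \<star> x = u \<star> (x \<star> v)" using \<open>v \<in> Cz\<close> x Cz_def c xc by (simp add: G.m_assoc)
            also have "\<dots> = (u \<star> x) \<star> v" using c xc by (simp add: G.m_assoc)
            also have "\<dots> = x \<star> (u \<star> v)" using \<open>u \<in> Cz\<close> x Cz_def c xc by (simp add: G.m_assoc)
            finally show ?thesis .
          qed
          then show ?thesis using c Cz_def by simp
        qed
        have Cz_i: "gi u \<in> Cz" if "u \<in> Cz" for u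
          using that inv_comm N_sub Cz_def by auto
        have Cz_p: "pw u n \<in> Cz" if "u \<in> Cz" for u n
          using that Cz_pw Cz_def by simp
        have cCz: "c \<in> Cz"
        proof -
          have "x \<star> (gone \<star> c \<star> gi gone) = (gone \<star> c \<star> gi gone) \<star> x" if "x \<in> Ncen" for x
            using that Ncen_def by blast
          then show ?thesis using Cz_def c_c N_sub by auto
        qed
        have c'Cz: "c' \<in> Cz" using Ncen_def Cz_def c'c c'_def g by auto
        have semi: "y = gone" if y: "y \<in> Cz" "y e = e" for y
        proof (rule ext)
          show "y \<in> carrier G" using y Cz_def by auto
          show "gone \<in> carrier G" by simp
          fix a assume a: "a \<in> L"
          then obtain x where x: "x \<in> Ncen" "a = x e" using True Y_def by auto
          have xc: "x \<in> carrier G" using x N_sub by auto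
          have yc: "y \<in> carrier G" using y Cz_def by auto
          have "y a = (y \<star> x) e" using x xc yc eL ev_mult by simp
          also have "\<dots> = (x \<star> y) e" using y x Cz_def by simp
          also have "\<dots> = a" using x xc yc eL ev_mult y by simp
          finally show "y a = gone a" using ev_one a by simp
        qed
        define phi where "phi = (\<lambda>(i, j). (pw c i \<star> pw c' j) e)"
        have inj: "inj_on phi ({..<q} \<times> {..<q})"
        proof (rule inj_onI)
          fix p1 p2 assume p: "p1 \<in> {..<q} \<times> {..<q}" "p2 \<in> {..<q} \<times> {..<q}" "phi p1 = phi p2"
          obtain i j where ij: "p1 = (i, j)" by (cases p1)
          obtain k l where kl: "p2 = (k, l)" by (cases p2)
          have lt: "i < q" "j < q" "k < q" "l < q" using p ij kl by auto
          define u where "u = pw c k \<star> pw c' l"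
          define u' where "u' = pw c i \<star> pw c' j"
          have uc: "u \<in> carrier G" "u' \<in> carrier G" using u_def u'_def c_c c'c by auto
          have uCz: "u \<in> Cz" "u' \<in> Cz" using u_def u'_def Cz_m Cz_p cCz c'Cz by auto
          have ue: "u' e = u e" using p ij kl phi_def u_def u'_def by simp
          have "(gi u \<star> u') e = e" using uc ue eL ev_mult ev_inv1 ev_closed by simp
          then have "gi u \<star> u' = gone" using semi Cz_m Cz_i uCz by simp
          then have E: "u' = u" using uc G.inv_comm by (metis G.inv_equality G.inv_inv G.inv_closed)
          have e1: "gi (pw c k) \<star> u' \<star> gi (pw c' j) = gi (pw c k) \<star> pw c i"
            using u'_def c_c c'c by (simp add: G.m_assoc)
          have e2: "gi (pw c k) \<star> u \<star> gi (pw c' j) = pw c' l \<star> gi (pw c' j)"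
            using u_def c_c c'c by (simp add: G.m_assoc)
          have "pw c (q - k) \<star> pw c i = pw c' l \<star> pw c' (q - j)"
            using e1 e2 E pw_inv[OF c_c c_q, of k] pw_inv[OF c'c c'q, of j] lt by simp
          then have E2: "pw c (q - k + i) = pw c' (l + (q - j))"
            using G.nat_pow_mult c_c c'c by simp
          have jl: "j = l"
          proof (rule ccontr)
            assume "j \<noteq> l"
            then have "\<not> q dvd (l + (q - j))" using dvd_range lt by auto
            then obtain w where "c' = pw (pw c' (l + (q - j))) w" using pw_trick[OF c'c c'q] by blast
            then have "c' = pw (pw c (q - k + i)) w" using E2 by simp
            then have "c' = pw c ((q - k + i) * w)" using G.nat_pow_pow[OF c_c] by simp
            then have "g \<star> c \<star> gi g = pw c ((q - k + i) * w)" using c'_def by simp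
            then show False using nc' by blast
          qed
          then have "pw c i = pw c k" using E u_def u'_def c_c c'c by simp
          then have "pw c i e = pw c k e" by simp
          then have "i = k" using Y0_inj lt unfolding inj_on_def by blast
          then show "p1 = p2" using ij kl jl by simp
        qed
        have "phi ` ({..<q} \<times> {..<q}) \<subseteq> L" using phi_def c_c c'c eL ev_closed by auto
        then have "card (phi ` ({..<q} \<times> {..<q})) \<le> card L" using card_mono finL by blast
        then have "q * q \<le> 2 * q" using card_image[OF inj] cardL by simp
        then show False using q_gt2 by simp
      qed
    qed
  qed
qed

end


lemma comm_mult: "a \<in> carrier G \<Longrightarrow> b \<in> carrier G \<Longrightarrow> d \<in> carrier G \<Longrightarrow> a \<star> d = d \<star> a \<Longrightarrow> b \<star> d = d \<star> b
   \<Longrightarrow> (a \<star> b) \<star> d = d \<star> (a \<star> b)"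
proof -
  assume c: "a \<in> carrier G" "b \<in> carrier G" "d \<in> carrier G" and ha: "a \<star> d = d \<star> a" and hb: "b \<star> d = d \<star> b"
  have "(a \<star> b) \<star> d = a \<star> (b \<star> d)" using c by (simp add: G.m_assoc)
  also have "\<dots> = a \<star> (d \<star> b)" using hb by simp
  also have "\<dots> = (a \<star> d) \<star> b" using c by (simp add: G.m_assoc)
  also have "\<dots> = (d \<star> a) \<star> b" using ha by simp
  also have "\<dots> = d \<star> (a \<star> b)" using c by (simp add: G.m_assoc)
  finally show ?thesis .
qed

definition isconj where "isconj a \<longleftrightarrow> (\<exists>g\<in>carrier G. a = g \<star> c \<star> gi g)"
lemma isconj_c: "isconj c" unfolding isconj_def using c_c by (intro bexI[of _ gone]) auto
lemma isconj_props: assumes "isconj a" shows "a \<in> carrier G" "pw a q = gone" "a \<noteq> gone"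
  using assms conj_q conj_ne c_c c_q c_ne unfolding isconj_def by auto

definition inB where "inB k a \<longleftrightarrow> a = pw c k e \<or> a = z (pw c k e)"
lemma inB_ex: assumes "a \<in> L" shows "\<exists>k<q. inB k a"
proof -
  obtain i where i: "a = pw c i e \<or> a = z (pw c i e)" using L_cases[OF assms] by blast
  have "pw c i = pw c (i mod q)" using pw_mod c_c c_q by blast
  then have "inB (i mod q) a" using i inB_def by simp
  moreover have "i mod q < q" using q_gt2 by simp
  ultimately show ?thesis by blast
qed
lemma inB_uniq: assumes k: "k < q" "l < q" and a: "inB k a" "inB l a" shows "k = l"
proof -
  have p1: "pw c k e \<in> L" "pw c l e \<in> L" using pw_evL c_c eL by auto
  have d1: "pw c k e \<noteq> z (pw c l e)" using DIST2[OF c_c c_q eL c_e] k by simp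
  have d2: "pw c l e \<noteq> z (pw c k e)" using DIST2[OF c_c c_q eL c_e] k by simp
  have "pw c k e = pw c l e"
    using a unfolding inB_def
  proof (elim disjE)
    assume "a = z (pw c k e)" "a = z (pw c l e)"
    then show ?thesis using z_inj p1 by simp
  qed (use d1 d2 in auto)
  then show ?thesis using Y0_inj k unfolding inj_on_def by blast
qed
lemma inB_z: "inB k a \<Longrightarrow> inB k (z a)" using z_z pw_evL c_c eL by (auto simp: inB_def)
lemma inB_pw: assumes "inB k a" shows "inB ((n + k) mod q) (pw c n a)"
proof -
  have eq: "pw c n (pw c k e) = pw c ((n + k) mod q) e"
    using pw_ev_add[of c e n k] c_c eL pw_mod[OF c_c c_q, of "n + k"] by simp
  from assms[unfolded inB_def] show ?thesis
  proof
    assume "a = pw c k e" then show ?thesis using eq by (simp add: inB_def)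
  next
    assume "a = z (pw c k e)"
    then have "pw c n a = z (pw c n (pw c k e))" using pw_z c_c pw_evL eL by simp
    then show ?thesis using eq by (simp add: inB_def)
  qed
qed
lemma inB_sb: assumes "inB mm x" "inB mm y" shows "y = x \<or> y = z x"
  using assms z_z pw_evL c_c eL unfolding inB_def by auto

context
  assumes cen: "\<forall>g\<in>carrier G. g \<star> R f = R f \<star> g"
begin

lemma cenR: "g \<in> carrier G \<Longrightarrow> g \<star> R f = R f \<star> g" using cen by blast

lemma zR: assumes a: "a \<in> L" shows "z a = R f a"
proof -
  have "z a = (R a \<star> R f) e" using z_def ev_mult R_in fL eL R_e_ev a by simp
  also have "\<dots> = (R f \<star> R a) e" using cenR R_in a by simp
  also have "\<dots> = R f a" using ev_mult R_in R_e_ev a eL fL by simp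
  finally show ?thesis .
qed

lemma RfRf: "R f \<star> R f = gone"
proof (rule ext)
  show "R f \<star> R f \<in> carrier G" "gone \<in> carrier G" using Rf_c by auto
  fix a assume a: "a \<in> L"
  have "(R f \<star> R f) a = z (z a)" using zR a z_L Rf_c ev_mult by simp
  then show "(R f \<star> R f) a = gone a" using z_z a ev_one by simp
qed

lemma solve_c: assumes p: "p \<in> carrier G" "p \<star> c = c \<star> p" and x: "x \<in> carrier G" "x \<star> c = c \<star> x"
  and xe: "x e = p e" shows "x = p"
proof -
  define w where "w = gi p \<star> x"
  have wc: "w \<in> carrier G" using w_def p x by simp
  have wcomm: "w \<star> c = c \<star> w" using comm_mult[of "gi p" x c] inv_comm[of p c] p x c_c w_def by simp
  have we: "w e = e" using w_def p x xe eL ev_mult ev_inv1 by simp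
  have "w = gone"
  proof (rule ext[OF wc G.one_closed])
    fix a assume a: "a \<in> L"
    have fixp: "w (pw c i e) = pw c i e" for i
    proof -
      have "pw c i \<star> w = w \<star> pw c i" using pw_comm[of c w i] wcomm c_c wc by simp
      then have "(w \<star> pw c i) e = (pw c i \<star> w) e" by simp
      then show ?thesis using wc c_c eL ev_mult we by simp
    qed
    obtain i where "a = pw c i e \<or> a = z (pw c i e)" using L_cases[OF a] by blast
    then show "w a = gone a"
    proof
      assume "a = pw c i e" then show ?thesis using fixp a ev_one by simp
    next
      assume ha: "a = z (pw c i e)"
      have "w a = w (z (pw c i e))" using ha by simp
      also have "\<dots> = z (w (pw c i e))" by (rule z_comm[OF wc pw_evL[OF c_c eL], symmetric])
      also have "\<dots> = a" using fixp ha by simp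
      finally show ?thesis using ev_one a by simp
    qed
  qed
  have "x = p \<star> w" using w_def p x by simp
  then show ?thesis using \<open>w = gone\<close> p by simp
qed

lemma CB1: assumes x: "x \<in> carrier G" "x \<star> c = c \<star> x" shows "\<exists>i. x = pw c i \<or> x = R f \<star> pw c i"
proof -
  have xe: "x e \<in> L" using x eL ev_closed by simp
  obtain i where i: "x e = pw c i e \<or> x e = z (pw c i e)" using L_cases[OF xe] by blast
  have pc: "pw c i \<star> c = c \<star> pw c i" using pw_self_comm c_c by simp
  from i show ?thesis
  proof
    assume "x e = pw c i e"
    then have "x = pw c i" using solve_c[of "pw c i" x] pc x c_c by simp
    then show ?thesis by blast
  next
    assume h: "x e = z (pw c i e)"
    have p: "R f \<star> pw c i \<in> carrier G" using Rf_c c_c by simp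
    have pcm: "(R f \<star> pw c i) \<star> c = c \<star> (R f \<star> pw c i)"
      using comm_mult[of "R f" "pw c i" c] Rf_c c_c pc cenR[of c] by simp
    have "(R f \<star> pw c i) e = z (pw c i e)" using zR pw_evL c_c eL ev_mult Rf_c by simp
    then have "x = R f \<star> pw c i" using solve_c[OF p pcm x] h by simp
    then show ?thesis by blast
  qed
qed

lemma CB1conj: assumes a: "isconj a" and x: "x \<in> carrier G" "x \<star> a = a \<star> x"
  shows "\<exists>i. x = pw a i \<or> x = R f \<star> pw a i"
proof -
  obtain g where g: "g \<in> carrier G" "a = g \<star> c \<star> gi g" using a isconj_def by auto
  have ac: "a \<in> carrier G" using g c_c by simp
  define x' where "x' = gi g \<star> x \<star> gi (gi g)"
  have x'c: "x' \<in> carrier G" using x'_def g x by simp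
  have "x' \<star> (gi g \<star> a \<star> gi (gi g)) = (gi g \<star> a \<star> gi (gi g)) \<star> x'"
    using conj_pres[of "gi g" x a] g x ac x'_def by simp
  moreover have "gi g \<star> a \<star> gi (gi g) = c" using g c_c by (simp add: G.m_assoc)
  ultimately have "x' \<star> c = c \<star> x'" by simp
  then obtain i where i: "x' = pw c i \<or> x' = R f \<star> pw c i" using CB1 x'c by blast
  have xx: "x = g \<star> x' \<star> gi g" using x'_def g x by (simp add: G.m_assoc)
  from i show ?thesis
  proof
    assume "x' = pw c i"
    then have "x = pw a i" using xx pw_conj g c_c by simp
    then show ?thesis by blast
  next
    assume "x' = R f \<star> pw c i"
    then have "x = g \<star> (R f \<star> pw c i) \<star> gi g" using xx by simp
    also have "\<dots> = (g \<star> R f) \<star> pw c i \<star> gi g" using g Rf_c c_c by (simp add: G.m_assoc)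
    also have "\<dots> = (R f \<star> g) \<star> pw c i \<star> gi g" using cenR g by simp
    also have "\<dots> = R f \<star> (g \<star> pw c i \<star> gi g)" using g Rf_c c_c by (simp add: G.m_assoc)
    also have "\<dots> = R f \<star> pw a i" using pw_conj g c_c by simp
    finally show ?thesis by blast
  qed
qed

lemma sqx: assumes a: "a \<in> carrier G" and x: "x = pw a i \<or> x = R f \<star> pw a i" shows "x \<star> x = pw a (i + i)"
  using x
proof
  assume "x = pw a i" then show ?thesis using G.nat_pow_mult a by simp
next
  assume xx: "x = R f \<star> pw a i"
  have "x \<star> x = R f \<star> (pw a i \<star> R f) \<star> pw a i" using xx a Rf_c by (simp add: G.m_assoc)
  also have "\<dots> = R f \<star> (R f \<star> pw a i) \<star> pw a i" using cenR a by simp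
  also have "\<dots> = (R f \<star> R f) \<star> (pw a i \<star> pw a i)" using a Rf_c by (simp add: G.m_assoc)
  also have "\<dots> = pw a (i + i)" using RfRf G.nat_pow_mult a by simp
  finally show ?thesis .
qed

lemma DISJ: assumes a: "isconj a" and b: "isconj b" and nb: "\<forall>k. b \<noteq> pw a k"
  and xa: "x \<in> CT a" and xb: "x \<in> CT b" shows "x = gone \<or> x = R f"
proof -
  have ac: "a \<in> carrier G" "pw a q = gone" "a \<noteq> gone" using isconj_props[OF a] by auto
  have bc: "b \<in> carrier G" "pw b q = gone" "b \<noteq> gone" using isconj_props[OF b] by auto
  have xc: "x \<in> carrier G" using xa CT_T T_carr by auto
  obtain i where i: "x = pw a i \<or> x = R f \<star> pw a i" using CB1conj[OF a xc] xa CT_def by auto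
  obtain j where j: "x = pw b j \<or> x = R f \<star> pw b j" using CB1conj[OF b xc] xb CT_def by auto
  show ?thesis
  proof (cases "q dvd i")
    case True
    then have "pw a i = gone" using pw_mod[OF ac(1,2), of i] by simp
    then show ?thesis using i Rf_c by auto
  next
    case ni: False
    show ?thesis
    proof (cases "q dvd j")
      case True
      then have "pw b j = gone" using pw_mod[OF bc(1,2), of j] by simp
      then show ?thesis using j Rf_c by auto
    next
      case nj: False
      have eq: "pw a (i + i) = pw b (j + j)" using sqx[OF ac(1) i] sqx[OF bc(1) j] by simp
      obtain u where "b = pw (pw b (j + j)) u" using pw_trick[OF bc(1,2) not_dvd2[OF nj]] by blast
      then have "b = pw (pw a (i + i)) u" using eq by simp
      then have "b = pw a ((i + i) * u)" using G.nat_pow_pow ac by simp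
      then show ?thesis using nb by blast
    qed
  qed
qed

lemma allc: assumes h: "\<forall>t\<in>T. t \<star> c = c \<star> t" and g: "g \<in> carrier G" shows "g \<star> c = c \<star> g"
proof (rule gen_induct[OF g])
  show "gone \<star> c = c \<star> gone" using c_c by simp
  show "t \<star> c = c \<star> t" if "t \<in> T" for t using h that by blast
  show "gi t \<star> c = c \<star> gi t" if "t \<in> T" for t using inv_comm h that T_carr c_c by blast
  show "x \<star> y \<star> c = c \<star> (x \<star> y)" if "x \<in> carrier G" "y \<in> carrier G" "x \<star> c = c \<star> x" "y \<star> c = c \<star> y" for x y
    using comm_mult c_c that by simp
qed

lemma Rf_ne: "R f \<noteq> gone"
proof
  assume "R f = gone" then have "R f e = e" using ev_one eL by simp
  then show False using R_e_ev fL fe by simp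
qed
lemma Rf_CT: "a \<in> carrier G \<Longrightarrow> R f \<in> CT a" using Rf_T cenR by (simp add: CT_def)

lemma cardS: "finite A \<Longrightarrow> card A - 2 \<le> card (A - {gone, R f})"
proof -
  assume "finite A"
  have "card {gone, R f} \<le> 2" by (simp add: card_insert_if)
  moreover have "card A - card {gone, R f} \<le> card (A - {gone, R f})" by (rule diff_card_le_card_Diff) simp
  ultimately show ?thesis by linarith
qed

lemma caseB5: assumes q3: "q \<noteq> 3" shows "\<exists>M. M \<lhd> G \<and> card (carrier G) = 2 * card (H <#>\<^bsub>G\<^esub> M)"
proof (rule QN)
  fix g assume g: "g \<in> carrier G"
  show "\<exists>i. g \<star> c \<star> gi g = pw c i"
  proof (rule ccontr)
    assume nc': "\<not> (\<exists>i. g \<star> c \<star> gi g = pw c i)"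
    define c' where "c' = g \<star> c \<star> gi g"
    have ic': "isconj c'" using c'_def g isconj_def by auto
    have c'c: "c' \<in> carrier G" using isconj_props[OF ic'] by simp
    have n1: "\<forall>k. c' \<noteq> pw c k" using nc' unfolding c'_def by blast
    have ne: "T - CT c \<noteq> {}"
    proof
      assume "T - CT c = {}"
      then have "\<forall>t\<in>T. t \<star> c = c \<star> t" by (auto simp: CT_def)
      then have "g \<star> c = c \<star> g" using allc g by simp
      then have "g \<star> c \<star> gi g = c" by (rule conj_comm[OF g c_c, THEN iffD2])
      then have "c' = c" using c'_def by simp
      then have "c' = pw c (Suc 0)" using c_c by simp
      then show False using n1 by blast
    qed
    have cT: "card (T - CT c) = q" using CT_card_eq[OF c_c c_q c_ne ne] by simp
    define c'' where "c'' = c \<star> c' \<star> gi c"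
    have ic'': "isconj c''"
    proof -
      have "c'' = (c \<star> g) \<star> c \<star> gi (c \<star> g)" using conj_conj[of c g c] c_c g c''_def c'_def by simp
      then show ?thesis using isconj_def c_c g by auto
    qed
    have c''c: "c'' \<in> carrier G" using isconj_props[OF ic''] by simp
    have n2: "\<forall>k. c'' \<noteq> pw c k"
    proof
      fix k show "c'' \<noteq> pw c k"
      proof
        assume h: "c'' = pw c k"
        have "c' = gi c \<star> c'' \<star> c" using c''_def c_c c'c by (simp add: G.m_assoc)
        also have "\<dots> = gi c \<star> (pw c k \<star> c)" using h c_c by (simp add: G.m_assoc)
        also have "\<dots> = gi c \<star> (c \<star> pw c k)" using pw_self_comm c_c by simp
        also have "\<dots> = pw c k" using c_c by simp
        finally show False using n1 by blast
      qed
    qed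
    have finCT: "finite (CT x)" for x using finite_subset[OF CT_T finT] .
    have cardCT: "q \<le> card (CT x)" if "isconj x" for x using CT_card isconj_props[OF that] by blast
    have q5: "5 \<le> q"
    proof -
      have "q \<noteq> 4" using odd_q by auto
      then show ?thesis using q_gt2 q3 by simp
    qed
    have bigS: "q - 2 \<le> card (CT x - {gone, R f})" if "isconj x" for x
      using cardS[OF finCT[of x]] cardCT[OF that] by linarith
    have subS: "CT x - {gone, R f} \<subseteq> T - CT y" if "isconj y" "isconj x" "\<forall>k. x \<noteq> pw y k" for x y
    proof
      fix u assume u: "u \<in> CT x - {gone, R f}"
      have "u \<notin> CT y" using DISJ[OF that(1) that(2) that(3), of u] u by auto
      then show "u \<in> T - CT y" using u CT_T by auto
    qed
    have n3: "\<forall>k. c'' \<noteq> pw c' k"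
    proof
      fix k show "c'' \<noteq> pw c' k"
      proof
        assume h: "c'' = pw c' k"
        have nk: "\<not> q dvd k"
        proof
          assume "q dvd k"
          then have "pw c' k = gone" using pw_mod[OF c'c isconj_props(2)[OF ic'], of k] by simp
          then show False using h isconj_props(3)[OF ic''] by simp
        qed
        define S where "S = CT c' - {gone, R f}"
        have cl1: "c \<star> t \<star> gi c \<in> S" if t: "t \<in> S" for t
        proof -
          have tT: "t \<in> T" and tc: "t \<in> carrier G" using t S_def CT_T T_carr by auto
          have tcomm: "t \<star> c' = c' \<star> t" using t S_def CT_def by simp
          have "(c \<star> t \<star> gi c) \<star> c'' = c'' \<star> (c \<star> t \<star> gi c)"
            using conj_pres[of c t c'] c_c tc c'c tcomm c''_def by simp
          then have "pw c' k \<star> (c \<star> t \<star> gi c) = (c \<star> t \<star> gi c) \<star> pw c' k" using h by simp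
          then have "c' \<star> (c \<star> t \<star> gi c) = (c \<star> t \<star> gi c) \<star> c'"
            using CT1[of c' "c \<star> t \<star> gi c" k] c'c c_c tc isconj_props[OF ic'] nk by simp
          moreover have "c \<star> t \<star> gi c \<in> T" using conjT c_c tT by simp
          moreover have "c \<star> t \<star> gi c \<noteq> gone"
          proof
            assume e: "c \<star> t \<star> gi c = gone"
            have "t = gi c \<star> (c \<star> t \<star> gi c) \<star> c" using conj_inv_back[of c t] c_c tc by simp
            also have "\<dots> = gone" using e c_c by simp
            finally show False using t S_def by simp
          qed
          moreover have "c \<star> t \<star> gi c \<noteq> R f"
          proof
            assume e: "c \<star> t \<star> gi c = R f"
            have "t = gi c \<star> (c \<star> t \<star> gi c) \<star> c" using conj_inv_back[of c t] c_c tc by simp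
            also have "\<dots> = gi c \<star> R f \<star> c" using e by simp
            also have "\<dots> = R f" using cenR[of "gi c"] c_c Rf_c by (simp add: G.m_assoc)
            finally show False using t S_def by simp
          qed
          ultimately show ?thesis using S_def CT_def by simp
        qed
        have cl: "\<forall>t\<in>S. pw c i \<star> t \<star> gi (pw c i) \<in> S" for i
        proof (induction i)
          case 0 show ?case
          proof
            fix t assume t: "t \<in> S"
            have tc: "t \<in> carrier G" using t S_def CT_T T_carr by auto
            then show "pw c 0 \<star> t \<star> gi (pw c 0) \<in> S" using t by simp
          qed
        next
          case (Suc i)
          show ?case
          proof
            fix t assume t: "t \<in> S"
            have tc: "t \<in> carrier G" using t S_def CT_T T_carr by auto
            have "pw c (Suc i) \<star> t \<star> gi (pw c (Suc i)) = pw c i \<star> (c \<star> t \<star> gi c) \<star> gi (pw c i)"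
              using conj_conj[of "pw c i" c t] c_c tc by simp
            then show "pw c (Suc i) \<star> t \<star> gi (pw c (Suc i)) \<in> S" using Suc.IH cl1[OF t] by simp
          qed
        qed
        have SsubT: "S \<subseteq> T - CT c" using subS[OF isconj_c ic' n1] S_def by simp
        have "q - 2 \<le> card S" using bigS[OF ic'] S_def by simp
        then have "0 < card S" using q5 by linarith
        then have "S \<noteq> {}" by (metis card.empty less_irrefl)
        then obtain s where s: "s \<in> S" by blast
        have sT: "s \<in> T - CT c" using s SsubT by auto
        have "Orb c s \<subseteq> S" using cl s Orb_def by auto
        then have TS: "T - CT c \<subseteq> S" using CT_main[OF c_c c_q c_ne sT] by simp
        have sub2: "(T - CT c) \<union> {gone, R f} \<subseteq> CT c'" using TS S_def one_CT Rf_CT c'c by auto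
        have "card ((T - CT c) \<union> {gone, R f}) = q + 2"
        proof -
          have "(T - CT c) \<inter> {gone, R f} = {}" using one_CT Rf_CT c_c by auto
          moreover have "card {gone, R f} = 2" using Rf_ne by simp
          moreover have "finite (T - CT c)" using finT by simp
          ultimately show ?thesis using card_Un_disjoint[of "T - CT c" "{gone, R f}"] cT by simp
        qed
        then have ge: "q + 2 \<le> card (CT c')" using card_mono[OF finCT sub2] by simp
        have "CT c - {gone, R f} \<subseteq> T - CT c'"
        proof
          fix u assume u: "u \<in> CT c - {gone, R f}"
          have "u \<notin> CT c'"
          proof
            assume "u \<in> CT c'"
            then have "u = gone \<or> u = R f" using DISJ[OF isconj_c ic' n1] u by blast
            then show False using u by blast
          qed
          then show "u \<in> T - CT c'" using u CT_T by auto
        qed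
        moreover have "CT c - {gone, R f} \<noteq> {}"
        proof -
          have "0 < card (CT c - {gone, R f})" using bigS[OF isconj_c] q5 by linarith
          then show ?thesis by (metis card.empty less_irrefl)
        qed
        ultimately have "T - CT c' \<noteq> {}" by blast
        then have "card (CT c') = q" using CT_card_eq[OF c'c] isconj_props[OF ic'] by simp
        then show False using ge by simp
      qed
    qed
    define S' where "S' = CT c' - {gone, R f}"
    define S'' where "S'' = CT c'' - {gone, R f}"
    have s1: "S' \<subseteq> T - CT c" using subS[OF isconj_c ic' n1] S'_def by simp
    have s2: "S'' \<subseteq> T - CT c" using subS[OF isconj_c ic'' n2] S''_def by simp
    have dj: "S' \<inter> S'' = {}" using DISJ[OF ic' ic'' n3] S'_def S''_def by auto
    have "card (S' \<union> S'') = card S' + card S''"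
      using card_Un_disjoint[of S' S''] dj finCT S'_def S''_def by simp
    moreover have "card (S' \<union> S'') \<le> q" using card_mono[of "T - CT c" "S' \<union> S''"] s1 s2 finT cT by simp
    moreover have "q - 2 \<le> card S'" "q - 2 \<le> card S''" using bigS ic' ic'' S'_def S''_def by auto
    ultimately show False using q5 by linarith
  qed
qed


lemma NF: assumes t: "t \<in> T" "t \<noteq> gone" "t \<noteq> R f" and a: "a \<in> L" shows "t a \<noteq> a \<and> t a \<noteq> z a"
proof -
  define g where "g = R a"
  have gc: "g \<in> carrier G" using g_def R_in a by simp
  have tc: "t \<in> carrier G" using t T_carr by auto
  define s where "s = gi g \<star> t \<star> gi (gi g)"
  have sT: "s \<in> T" using conjT[of "gi g" t] gc t s_def by simp
  have ss: "s = gi g \<star> t \<star> g" using s_def gc by simp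
  have ga: "g e = a" using g_def R_e_ev a by simp
  have se: "s e = gi g (t a)" using ss gc tc eL ev_mult ga a by simp
  have tback: "t = g \<star> s \<star> gi g" using ss gc tc by (simp add: G.m_assoc)
  show ?thesis
  proof
    show "t a \<noteq> a"
    proof
      assume "t a = a"
      then have "s e = e" using se ev_inv1[OF gc eL] ga by simp
      then have "s = gone" using T_unique[OF sT one_T] ev_one eL by simp
      then have "t = gone" using tback gc by simp
      then show False using t by simp
    qed
    show "t a \<noteq> z a"
    proof
      assume "t a = z a"
      then have "s e = gi g (z (g e))" using se ga by simp
      also have "\<dots> = z (gi g (g e))" using z_comm[of "gi g" "g e"] gc eL ev_closed by simp
      also have "\<dots> = f" using ev_inv1[OF gc eL] z_e by simp
      finally have "s = R f" using T_unique[OF sT Rf_T] R_e_ev fL by simp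
      then have "t = g \<star> R f \<star> gi g" using tback by simp
      also have "\<dots> = R f" using cenR gc Rf_c by (simp add: G.m_assoc)
      finally show False using t by simp
    qed
  qed
qed

lemma tblk: assumes t: "t \<in> carrier G" and ab: "a \<in> L" "b \<in> L" and k: "inB k (t a)" "inB k (t b)"
  shows "b = a \<or> b = z a"
proof -
  have "t b = t a \<or> t b = z (t a)" using inB_sb[OF k] .
  then show ?thesis
  proof
    assume "t b = t a" then show ?thesis using ev_inj t ab by blast
  next
    assume "t b = z (t a)"
    then have "t b = t (z a)" using z_comm t ab by simp
    then show ?thesis using ev_inj t ab z_L by blast
  qed
qed

lemma blkdist: assumes t: "t \<in> carrier G" and m: "m1 < q" "m2 < q" "m1 \<noteq> m2"
  and k: "inB k (t (pw c m1 e))" "inB k (t (pw c m2 e))" shows False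
proof -
  have L1: "pw c m1 e \<in> L" "pw c m2 e \<in> L" using pw_evL c_c eL by auto
  have "pw c m2 e = pw c m1 e \<or> pw c m2 e = z (pw c m1 e)" using tblk[OF t L1 k] .
  then have "inB m1 (pw c m2 e)" using inB_def by auto
  moreover have "inB m2 (pw c m2 e)" using inB_def by simp
  ultimately show False using inB_uniq m by blast
qed

lemma Ptrans: assumes q3: "q = 3" and t: "t \<in> T" "t \<noteq> gone" "t \<noteq> R f"
  shows "\<exists>j. \<forall>a\<in>L. t a = pw c j a \<or> t a = z (pw c j a)"
proof -
  have tc: "t \<in> carrier G" using t T_carr by auto
  have pL: "pw c mm e \<in> L" for mm using pw_evL c_c eL by simp
  have self: "inB mm (pw c mm e)" for mm using inB_def by simp
  obtain j where j: "j < q" "inB j (t (pw c 0 e))" using inB_ex[of "t (pw c 0 e)"] ev_closed tc pL by blast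
  obtain k1 where k1: "k1 < q" "inB k1 (t (pw c 1 e))" using inB_ex[of "t (pw c 1 e)"] ev_closed tc pL by blast
  obtain k2 where k2: "k2 < q" "inB k2 (t (pw c 2 e))" using inB_ex[of "t (pw c 2 e)"] ev_closed tc pL by blast
  have nfix: "k \<noteq> mm" if "inB k (t (pw c mm e))" for k mm
  proof
    assume "k = mm"
    then have "t (pw c mm e) = pw c mm e \<or> t (pw c mm e) = z (pw c mm e)" using inB_sb[OF self] that by simp
    then show False using NF[OF t pL] by blast
  qed
  have j0: "j \<noteq> 0" using nfix j by blast
  have k11: "k1 \<noteq> 1" using nfix k1 by blast
  have k22: "k2 \<noteq> 2" using nfix k2 by blast
  have k1j: "k1 \<noteq> j" using blkdist[OF tc, of 0 1 k1] j k1 q3 by auto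
  have k2j: "k2 \<noteq> j" using blkdist[OF tc, of 0 2 k2] j k2 q3 by auto
  have k21: "k2 \<noteq> k1" using blkdist[OF tc, of 1 2 k2] k1 k2 q3 by auto
  have s1: "j \<in> {1, 2}" using j(1) q3 j0 by auto
  have s2: "k1 \<in> {0, 2}" using k1(1) q3 k11 by auto
  have s3: "k2 \<in> {0, 1}" using k2(1) q3 k22 by auto
  have arith: "j mod 3 = j \<and> k1 = (1 + j) mod 3 \<and> k2 = (2 + j) mod 3"
    using s1 s2 s3 k1j k2j k21 by auto
  have blk: "inB ((mm + j) mod q) (t (pw c mm e))" if mm: "mm < q" for mm
  proof -
    have "mm = 0 \<or> mm = 1 \<or> mm = 2" using mm q3 by auto
    then show ?thesis using j k1 k2 arith q3 by (auto simp: add.commute)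
  qed
  have main: "t y = pw c j y \<or> t y = z (pw c j y)" if mm: "mm < q" and y: "y = pw c mm e" for mm y
  proof -
    have "inB ((j + mm) mod q) (pw c j y)" using inB_pw[of mm y j] self y by simp
    moreover have "inB ((j + mm) mod q) (t y)" using blk[OF mm] y by (simp add: add.commute)
    ultimately show ?thesis using inB_sb by blast
  qed
  have "\<forall>a\<in>L. t a = pw c j a \<or> t a = z (pw c j a)"
  proof
    fix a assume a: "a \<in> L"
    obtain mm where mm: "mm < q" "inB mm a" using inB_ex[OF a] by blast
    from mm(2) show "t a = pw c j a \<or> t a = z (pw c j a)" unfolding inB_def
    proof
      assume "a = pw c mm e" then show ?thesis using main mm by blast
    next
      assume az: "a = z (pw c mm e)"
      define y where "y = pw c mm e"
      have yL: "y \<in> L" using y_def pL by simp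
      have ta: "t a = z (t y)" using az y_def z_comm tc yL by simp
      have pa: "pw c j a = z (pw c j y)" using az y_def pw_z c_c yL by simp
      have "t y = pw c j y \<or> t y = z (pw c j y)" using main mm y_def by blast
      then show ?thesis
      proof
        assume "t y = pw c j y" then show ?thesis using ta pa by simp
      next
        assume "t y = z (pw c j y)"
        then have "t a = pw c j y" using ta z_z pw_evL c_c yL by simp
        moreover have "z (pw c j a) = pw c j y" using pa z_z pw_evL c_c yL by simp
        ultimately show ?thesis by simp
      qed
    qed
  qed
  then show ?thesis by blast
qed

definition PP where "PP g \<longleftrightarrow> (\<exists>i. \<forall>a\<in>L. g a = pw c i a \<or> g a = z (pw c i a))"

lemma PP_mult: assumes x: "x \<in> carrier G" "PP x" and y: "y \<in> carrier G" "PP y" shows "PP (x \<star> y)"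
proof -
  obtain i where i: "\<forall>a\<in>L. x a = pw c i a \<or> x a = z (pw c i a)" using x PP_def by auto
  obtain j where j: "\<forall>a\<in>L. y a = pw c j a \<or> y a = z (pw c j a)" using y PP_def by auto
  have "(x \<star> y) a = pw c (i + j) a \<or> (x \<star> y) a = z (pw c (i + j) a)" if a: "a \<in> L" for a
  proof -
    have b: "pw c j a \<in> L" using pw_evL c_c a by simp
    have pij: "pw c (i + j) a = pw c i (pw c j a)" using pw_ev_add c_c a by simp
    have xb: "x (pw c j a) = pw c (i + j) a \<or> x (pw c j a) = z (pw c (i + j) a)" using i b pij by simp
    have ev: "(x \<star> y) a = x (y a)" using ev_mult x y a by simp
    from j a have "y a = pw c j a \<or> y a = z (pw c j a)" by blast
    then show ?thesis
    proof
      assume "y a = pw c j a" then show ?thesis using ev xb by simp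
    next
      assume ya: "y a = z (pw c j a)"
      have "x (z (pw c j a)) = z (x (pw c j a))" using z_comm[OF x(1) b] by simp
      then show ?thesis using ev ya xb z_z pw_evL c_c a by auto
    qed
  qed
  then show ?thesis using PP_def by blast
qed

lemma PP_inv: assumes x: "x \<in> carrier G" "PP x" shows "PP (gi x)"
proof -
  obtain i where i: "\<forall>a\<in>L. x a = pw c i a \<or> x a = z (pw c i a)" using x PP_def by auto
  define J where "J = (q - 1) * i"
  have bck: "pw c J (pw c i b) = b" if b: "b \<in> L" for b
  proof -
    have "pw c J (pw c i b) = pw c (J + i) b" using pw_ev_add c_c b by simp
    also have "J + i = q * i" using J_def q_gt2 by (simp add: algebra_simps)
    also have "pw c (q * i) = gone" using G.nat_pow_pow[OF c_c, of q i, symmetric] c_q by simp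
    finally show ?thesis using ev_one b by simp
  qed
  have "gi x a = pw c J a \<or> gi x a = z (pw c J a)" if a: "a \<in> L" for a
  proof -
    define b where "b = gi x a"
    have bL: "b \<in> L" using b_def x a ev_closed by simp
    have xb: "x b = a" using b_def ev_inv2 x a by simp
    have "x b = pw c i b \<or> x b = z (pw c i b)" using i bL by blast
    then show ?thesis
    proof
      assume "x b = pw c i b"
      then have "pw c J a = b" using xb bck bL by simp
      then show ?thesis using b_def by simp
    next
      assume "x b = z (pw c i b)"
      then have "a = z (pw c i b)" using xb by simp
      then have "pw c J a = z (pw c J (pw c i b))" using pw_z c_c pw_evL bL by simp
      then have "pw c J a = z b" using bck bL by simp
      then have "z (pw c J a) = b" using z_z bL by simp
      then show ?thesis using b_def by simp
    qed
  qed
  then show ?thesis using PP_def by blast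
qed

lemma PP_all: assumes q3: "q = 3" and g: "g \<in> carrier G" shows "PP g"
proof (rule gen_induct[OF g])
  show "PP gone" unfolding PP_def using ev_one by (intro exI[of _ 0]) simp
  show "PP t" if t: "t \<in> T" for t
  proof (cases "t = gone \<or> t = R f")
    case True
    then show ?thesis
    proof
      assume "t = gone" then show ?thesis unfolding PP_def using ev_one by (intro exI[of _ 0]) simp
    next
      assume "t = R f" then show ?thesis unfolding PP_def using zR ev_one by (intro exI[of _ 0]) simp
    qed
  next
    case False
    then show ?thesis using Ptrans[OF q3 t] PP_def by auto
  qed
  then show "PP (gi t)" if t: "t \<in> T" for t using PP_inv t T_carr by blast
  show "PP (x \<star> y)" if "x \<in> carrier G" "y \<in> carrier G" "PP x" "PP y" for x y using PP_mult that by blast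
qed

lemma caseB3: assumes q3: "q = 3" shows False
proof -
  have Kfix: "k a = a \<or> k a = z a" if k: "k \<in> K" and a: "a \<in> L" for k a
  proof -
    have kc: "k \<in> carrier G" and ke: "k e = e \<or> k e = z e" using k K_iff z_e by auto
    obtain i where i: "\<forall>a\<in>L. k a = pw c i a \<or> k a = z (pw c i a)" using PP_all[OF q3 kc] PP_def by auto
    have "q dvd i"
    proof (rule ccontr)
      assume ni: "\<not> q dvd i"
      have np: "pw c i e \<noteq> e" "pw c i e \<noteq> z e" using NP[OF c_c c_q c_ne ni eL] by auto
      have pL: "pw c i e \<in> L" using pw_evL c_c eL by simp
      have "k e = pw c i e \<or> k e = z (pw c i e)" using i eL by blast
      then show False
      proof
        assume "k e = pw c i e" then show False using ke np by auto
      next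
        assume h: "k e = z (pw c i e)"
        from ke show False
        proof
          assume "k e = e"
          then have "z (pw c i e) = e" using h by simp
          then have "pw c i e = z e" using z_z pL by metis
          then show False using np by simp
        next
          assume "k e = z e"
          then have "z (pw c i e) = z e" using h by simp
          then have "pw c i e = e" using z_inj pL eL by simp
          then show False using np by simp
        qed
      qed
    qed
    then have "pw c i = gone" using pw_mod[OF c_c c_q, of i] by simp
    then show ?thesis using i a ev_one by auto
  qed
  have conjK: "g \<star> k \<star> gi g \<in> K" if g: "g \<in> carrier G" and k: "k \<in> K" for g k
  proof -
    have kc: "k \<in> carrier G" using k K_carr by auto
    define a where "a = gi g e"
    have aL: "a \<in> L" using a_def g eL ev_closed by simp
    have ga: "g a = e" using a_def ev_inv2 g eL by simp
    have ev: "(g \<star> k \<star> gi g) e = g (k a)" using a_def g kc eL ev_mult ev_closed by simp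
    have "k a = a \<or> k a = z a" using Kfix k aL by simp
    then have "(g \<star> k \<star> gi g) e = e \<or> (g \<star> k \<star> gi g) e = f"
    proof
      assume "k a = a" then show ?thesis using ev ga by simp
    next
      assume "k a = z a"
      then have "(g \<star> k \<star> gi g) e = z (g a)" using ev z_comm g aL by simp
      then show ?thesis using ga z_e by simp
    qed
    then show ?thesis using K_iff g kc by simp
  qed
  have cos: "g <#\<^bsub>G\<^esub> K #>\<^bsub>G\<^esub> gi g = K" if g: "g \<in> carrier G" for g
  proof
    show "g <#\<^bsub>G\<^esub> K #>\<^bsub>G\<^esub> gi g \<subseteq> K"
      using conjK g unfolding l_coset_def r_coset_def by auto
    show "K \<subseteq> g <#\<^bsub>G\<^esub> K #>\<^bsub>G\<^esub> gi g"
    proof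
      fix k assume k: "k \<in> K"
      have kc: "k \<in> carrier G" using k K_carr by auto
      have k': "gi g \<star> k \<star> gi (gi g) \<in> K" using conjK[of "gi g" k] g k by simp
      have "k = g \<star> (gi g \<star> k \<star> gi (gi g)) \<star> gi g" using g kc by (simp add: G.m_assoc)
      then show "k \<in> g <#\<^bsub>G\<^esub> K #>\<^bsub>G\<^esub> gi g" using k' unfolding l_coset_def r_coset_def by blast
    qed
  qed
  have "normalizer G K = carrier G"
    unfolding normalizer_def stabilizer_def using cos K_carr by auto
  then have "K = carrier G" using normK by simp
  then show False using KG by simp
qed

end


lemma main: "\<exists>M. M \<lhd> G \<and> card (carrier G) = 2 * card (H <#>\<^bsub>G\<^esub> M)"
proof (cases "\<exists>g\<in>carrier G. g \<star> R f \<noteq> R f \<star> g")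
  case True then show ?thesis using caseA by blast
next
  case False
  then have cen: "\<forall>g\<in>carrier G. g \<star> R f = R f \<star> g" by blast
  show ?thesis
  proof (cases "q = 3")
    case True then show ?thesis using caseB3[OF cen] by blast
  next
    case False then show ?thesis using caseB5[OF cen] by blast
  qed
qed

end

theorem proposition5p12:
  fixes L :: "'a set" and m :: "'a \<Rightarrow> 'a \<Rightarrow> 'a" and e :: 'a
    and q :: nat and K :: "('a \<Rightarrow> 'a) set"
  assumes "Factorial_Ring.prime q" and "odd q"
    and "rcc_loop L m e"
    and "card L = 2 * q"
    and "subgroup K (env_G L m)"
    and "env_H L m e \<subset> K" and "K \<subset> carrier (env_G L m)"
    and "card (carrier (env_G L m)) = q * card K"
    and "card K = 2 * card (env_H L m e)"
    and "normalizer (env_G L m) K = K"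
  shows "\<exists>M. M \<lhd> env_G L m \<and>
           card (carrier (env_G L m)) = 2 * card (env_H L m e <#>\<^bsub>env_G L m\<^esub> M)"
proof -
  interpret env_setup L m e q K
    using assms by (rule env_setup.intro)
  show ?thesis using main .
qed

end
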